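(* Let $g:\{0,1,2,3\}^*\to\{0,1,2,3\}^*$ be the morphism $g(0)=01$, $g(1)=20$, $g(2)=23$, $g(3)=02$, and $\tau$ the coding $\tau(0)=2$, $\tau(1)=1$, $\tau(2)=0$, $\tau(3)=1$; let $\mathbf{vtm}=\tau(g^\omega(0))$. Let $\zeta:\{0,1,2\}^*\to\{0,1\}^*$ be the morphism $\zeta(0)=111000110010110001110010$, $\zeta(1)=111000101100011100101100010$, $\zeta(2)=111000110010110001011100101100$. Then the infinite word $\zeta(\mathbf{vtm})$ contains only three distinct squares, namely $0^2$, $1^2$, and $(01)^2$. It is generated by a $2$-automaton with $88$ states (so its weight is $2\cdot 88=176$).
   Context: A square is a nonempty word $xx$; "containing" means as a factor. $g^\omega(0)$ denotes the infinite fixed point of $g$ starting with $0$. A $2$-automaton (DFAO) with $s$ states generates $(a_n)_{n\ge0}$ if on input the base-$2$ representation of $n$ (most significant digit first) it outputs $a_n$; equivalently the word is the image under a coding of a fixed point of a $2$-uniform morphism on $s$ letters. The weight of such a word is $2\cdot s$. *)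

theory Defs
  imports Main
begin

definition morph_list :: "('a \<Rightarrow> 'b list) \<Rightarrow> 'a list \<Rightarrow> 'b list" where
  "morph_list h w = concat (map h w)"

text \<open>Fixed point h^omega(a) of a morphism h with h(a) starting with a and
  |h(b)| >= 2 for all b (here: 2-uniform): the n-th letter is read off
  from the prefix h^(n+1)(a), which has length > n.\<close>
definition fixpt :: "('a \<Rightarrow> 'a list) \<Rightarrow> 'a \<Rightarrow> (nat \<Rightarrow> 'a)" where
  "fixpt h a = (\<lambda>n. ((morph_list h ^^ Suc n) [a]) ! n)"

text \<open>Image of an infinite word under a non-erasing morphism: the i-th letter
  is read off from the image of the prefix of length i+1 (of length > i).\<close>
definition morph_inf :: "('a \<Rightarrow> 'b list) \<Rightarrow> (nat \<Rightarrow> 'a) \<Rightarrow> (nat \<Rightarrow> 'b)" where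
  "morph_inf h x = (\<lambda>i. morph_list h (map x [0..<Suc i]) ! i)"

definition is_factor :: "'a list \<Rightarrow> (nat \<Rightarrow> 'a) \<Rightarrow> bool" where
  "is_factor u x \<longleftrightarrow> (\<exists>i. u = map x [i..<i + length u])"

definition is_square :: "'a list \<Rightarrow> bool" where
  "is_square u \<longleftrightarrow> (\<exists>v. v \<noteq> [] \<and> u = v @ v)"

text \<open>Base-2 representation, most significant digit first; 0 is represented
  by the empty word (canonical representation).\<close>
fun bin_lsd :: "nat \<Rightarrow> nat list" where
  "bin_lsd n = (if n = 0 then [] else n mod 2 # bin_lsd (n div 2))"
declare bin_lsd.simps[simp del]

definition bin_msd :: "nat \<Rightarrow> nat list" where
  "bin_msd n = rev (bin_lsd n)"

definition dfao2_generates ::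
  "nat \<Rightarrow> (nat \<Rightarrow> nat \<Rightarrow> nat) \<Rightarrow> (nat \<Rightarrow> 'b) \<Rightarrow> (nat \<Rightarrow> 'b) \<Rightarrow> bool" where
  "dfao2_generates s delta out a \<longleftrightarrow>
     0 < s \<and> (\<forall>q<s. \<forall>d<2. delta q d < s) \<and>
     (\<forall>n. out (foldl delta 0 (bin_msd n)) = a n)"

definition two_automatic_with_states :: "nat \<Rightarrow> (nat \<Rightarrow> 'b) \<Rightarrow> bool" where
  "two_automatic_with_states s a \<longleftrightarrow>
     (\<exists>delta (out :: nat \<Rightarrow> 'b). dfao2_generates s delta out a)"

definition g :: "nat \<Rightarrow> nat list" where
  "g b = (if b = 0 then [0,1] else if b = 1 then [2,0] else if b = 2 then [2,3] else [0,2])"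

definition tau :: "nat \<Rightarrow> nat" where
  "tau b = (if b = 0 then 2 else if b = 1 then 1 else if b = 2 then 0 else 1)"

definition vtm :: "nat \<Rightarrow> nat" where
  "vtm = tau \<circ> fixpt g 0"

definition zeta :: "nat \<Rightarrow> nat list" where
  "zeta b = (if b = 0 then [1,1,1,0,0,0,1,1,0,0,1,0,1,1,0,0,0,1,1,1,0,0,1,0]
    else if b = 1 then [1,1,1,0,0,0,1,0,1,1,0,0,0,1,1,1,0,0,1,0,1,1,0,0,0,1,0]
    else [1,1,1,0,0,0,1,1,0,0,1,0,1,1,0,0,0,1,0,1,1,1,0,0,1,0,1,1,0,0])"

end

theory Submission
  imports Defs
begin

function tm :: "nat \<Rightarrow> bool" where
  "tm n = (if n = 0 then False else if even n then tm (n div 2) else \<not> tm (n div 2))"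
  by pat_completeness auto
termination by (relation "measure id") auto
declare tm.simps[simp del]

lemma tm0[simp]: "tm 0 = False" by (simp add: tm.simps)
lemma tm_even[simp]: "tm (2*m) = tm m"
  by (cases "m = 0") (simp_all add: tm.simps[of "2*m"])
lemma tm_odd[simp]: "tm (Suc (2*m)) = (\<not> tm m)"
  by (simp add: tm.simps[of "Suc (2*m)"])
lemma tm1[simp]: "tm 1 = True" using tm_odd[of 0] by simp
lemma tmS0[simp]: "tm (Suc 0) = True" using tm_odd[of 0] by simp
lemma tm_odd2[simp]: "tm (2*m+1) = (\<not> tm m)" using tm_odd by simp
lemma tm_oo[simp]: "tm (Suc (Suc (Suc (2*m)))) = (\<not> tm (Suc m))"
  using tm_odd[of "Suc m"] by simp
lemma tm_ee[simp]: "tm (Suc (Suc (2*m))) = tm (Suc m)"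
  using tm_even[of "Suc m"] by simp

function X :: "nat \<Rightarrow> nat" where
  "X n = (if n = 0 then 0 else g (X (n div 2)) ! (n mod 2))"
  by pat_completeness auto
termination by (relation "measure id") auto
declare X.simps[simp del]

definition xcode :: "bool \<Rightarrow> bool \<Rightarrow> nat" where
  "xcode a b = (if \<not> a \<and> b then 0 else if a \<and> b then 1 else if a \<and> \<not> b then 2 else 3)"

lemma X0[simp]: "X 0 = 0" by (subst X.simps) simp
lemma X_even: "X (2*m) = g (X m) ! 0"
proof (cases "m = 0")
  case True then show ?thesis by (simp add: g_def)
next
  case False then show ?thesis by (subst X.simps) simp
qed
lemma X_odd: "X (Suc (2*m)) = g (X m) ! 1"
  by (subst X.simps) simp

lemma X_code: "X k = xcode (tm k) (tm (Suc k))"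
proof (induction k rule: less_induct)
  case (less k)
  show ?case
  proof (cases "k = 0")
    case True then show ?thesis by (simp add: xcode_def)
  next
    case False
    obtain m where m: "k = 2*m \<or> k = Suc (2*m)" by (metis oddE evenE Suc_eq_plus1)
    have mk: "m < k" using m False by auto
    have IH: "X m = xcode (tm m) (tm (Suc m))" using less mk by blast
    show ?thesis using m
    proof
      assume k: "k = 2*m"
      show ?thesis unfolding k X_even IH
        by (cases "tm m"; cases "tm (Suc m)") (simp_all add: xcode_def g_def)
    next
      assume k: "k = Suc (2*m)"
      show ?thesis unfolding k X_odd IH
        by (cases "tm m"; cases "tm (Suc m)") (simp_all add: xcode_def g_def)
    qed
  qed
qed

lemma g_X: "g (X N) = [X (2*N), X (Suc (2*N))]"
  unfolding X_even X_odd by (simp add: g_def)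

lemma concat_gX: "concat (map (\<lambda>k. g (X k)) [0..<N]) = map X [0..<2*N]"
proof (induction N)
  case 0 then show ?case by simp
next
  case (Suc N)
  have "[0..<2 * Suc N] = [0..<2*N] @ [2*N, Suc (2*N)]" by simp
  then show ?case using Suc by (simp add: g_X)
qed

lemma iter_X: "(morph_list g ^^ n) [0] = map X [0..<2^n]"
proof (induction n)
  case 0 then show ?case by simp
next
  case (Suc n)
  have "(morph_list g ^^ Suc n) [0] = morph_list g ((morph_list g ^^ n) [0])" by simp
  also have "\<dots> = concat (map g (map X [0..<2^n]))"
    unfolding Suc.IH by (simp add: morph_list_def)
  also have "\<dots> = map X [0..<2^Suc n]" using concat_gX[of "2^n"] by (simp add: comp_def)
  finally show ?case .
qed

lemma fixpt_X: "fixpt g 0 = X"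
proof
  fix n
  have "n < 2 ^ Suc n" by (metis Suc_lessD less_exp)
  then show "fixpt g 0 n = X n" unfolding fixpt_def iter_X by simp
qed

definition lett :: "bool \<Rightarrow> bool \<Rightarrow> nat" where
  "lett a b = (if \<not> a \<and> b then 2 else if a \<and> \<not> b then 0 else 1)"

lemma vtm_eq: "vtm k = lett (tm k) (tm (Suc k))"
  unfolding vtm_def fixpt_X X_code
  by (cases "tm k"; cases "tm (Suc k)") (simp_all add: tau_def xcode_def lett_def)

definition b2n :: "bool \<Rightarrow> nat" where "b2n b = (if b then 1 else 0)"

lemma len_zeta: "length (zeta (lett a b)) + 3 * b2n a = 27 + 3 * b2n b"
  by (cases a; cases b) (simp_all add: zeta_def lett_def b2n_def)

abbreviation aw :: "nat \<Rightarrow> nat" where "aw \<equiv> morph_inf zeta vtm"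

lemma Bk: "length (concat (map (zeta \<circ> vtm) [0..<k])) = 27*k + 3 * b2n (tm k)"
proof (induction k)
  case 0 then show ?case by (simp add: b2n_def)
next
  case (Suc k)
  then show ?case using len_zeta[of "tm k" "tm (Suc k)"] by (simp add: vtm_eq)
qed

lemma concat_split: "m \<le> n \<Longrightarrow> concat (map f [0..<n]) = concat (map f [0..<m]) @ concat (map f [m..<n])"
  by (metis concat_append le_add_diff_inverse map_append upt_add_eq_append zero_le)

lemma pref_aux: "m \<le> n \<Longrightarrow> i < length (concat (map f [0..<m])) \<Longrightarrow>
   concat (map f [0..<n]) ! i = concat (map f [0..<m]) ! i"
  using concat_split[of m n f] by (simp add: nth_append)

lemma pref: "i < length (concat (map (zeta \<circ> vtm) [0..<n])) \<Longrightarrow> aw i = concat (map (zeta \<circ> vtm) [0..<n]) ! i"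
proof -
  assume A: "i < length (concat (map (zeta \<circ> vtm) [0..<n]))"
  have B: "i < length (concat (map (zeta \<circ> vtm) [0..<Suc i]))" using Bk[of "Suc i"] by simp
  have "aw i = concat (map (zeta \<circ> vtm) [0..<Suc i]) ! i"
    by (simp add: morph_inf_def morph_list_def)
  also have "\<dots> = concat (map (zeta \<circ> vtm) [0..<max n (Suc i)]) ! i"
    using pref_aux[OF _ B, of "max n (Suc i)"] by simp
  also have "\<dots> = concat (map (zeta \<circ> vtm) [0..<n]) ! i"
    using pref_aux[OF _ A, of "max n (Suc i)"] by simp
  finally show ?thesis .
qed

lemma blk: "j < length (zeta (vtm k)) \<Longrightarrow> aw (27*k + 3 * b2n (tm k) + j) = zeta (vtm k) ! j"
proof -
  assume j: "j < length (zeta (vtm k))"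
  have e: "concat (map (zeta \<circ> vtm) [0..<Suc k]) = concat (map (zeta \<circ> vtm) [0..<k]) @ zeta (vtm k)"
    by simp
  have "27*k + 3 * b2n (tm k) + j < length (concat (map (zeta \<circ> vtm) [0..<Suc k]))"
    using j Bk[of k] e by simp
  then have "aw (27*k + 3 * b2n (tm k) + j) = concat (map (zeta \<circ> vtm) [0..<Suc k]) ! (27*k + 3 * b2n (tm k) + j)"
    by (rule pref)
  also have "\<dots> = zeta (vtm k) ! j" unfolding e using Bk[of k] by (simp add: nth_append)
  finally show ?thesis .
qed

definition FF :: "nat \<Rightarrow> bool \<Rightarrow> bool \<Rightarrow> bool \<Rightarrow> nat" where
  "FF e p c n = (if c \<and> e < 3 then zeta (lett p c) ! (27 + e - 3 * b2n p) else zeta (lett c n) ! (e - 3 * b2n c))"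

lemma KL: "e < 27 \<Longrightarrow> aw (27*k + e) = FF e (tm (k - 1)) (tm k) (tm (Suc k))"
proof (cases "tm k \<and> e < 3")
  case True
  assume e: "e < 27"
  then obtain k' where k: "k = Suc k'" using True by (cases k) auto
  have L: "length (zeta (vtm k')) + 3 * b2n (tm k') = 30" using len_zeta[of "tm k'" "tm k"] True k
    by (simp add: vtm_eq b2n_def)
  have j: "27 + e - 3 * b2n (tm k') < length (zeta (vtm k'))" using L True by (simp add: b2n_def split: if_splits)
  have eq: "27*k + e = 27*k' + 3 * b2n (tm k') + (27 + e - 3 * b2n (tm k'))" using k by (simp add: b2n_def)
  show ?thesis unfolding eq blk[OF j] using True k by (simp add: FF_def vtm_eq)
next
  case False
  assume e: "e < 27"
  have L: "length (zeta (vtm k)) + 3 * b2n (tm k) = 27 + 3 * b2n (tm (Suc k))" using len_zeta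
    by (simp add: vtm_eq)
  have j: "e - 3 * b2n (tm k) < length (zeta (vtm k))" using L False e by (simp add: b2n_def split: if_splits)
  have eq: "27*k + e = 27*k + 3 * b2n (tm k) + (e - 3 * b2n (tm k))" using False by (auto simp add: b2n_def)
  show ?thesis unfolding eq blk[OF j] FF_def if_not_P[OF False] by (simp add: vtm_eq)
qed

lemma upt27: "[0..<27] = [0,1,2,3,4,5,6,7,8,9,10,11,12,13,14,15,16,17,18,19,20,21,22,23,24,25,26]"
  by (simp add: upt_rec)

lemma all27: "(\<forall>e<(27::nat). P e) \<longleftrightarrow> list_all P [0,1,2,3,4,5,6,7,8,9,10,11,12,13,14,15,16,17,18,19,20,21,22,23,24,25,26]"
  unfolding upt27[symmetric] by (auto simp add: list_all_iff)

definition FFt :: "nat \<Rightarrow> bool \<Rightarrow> bool \<Rightarrow> bool \<Rightarrow> nat" where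
  "FFt e p c n = (if e < 13 then (if e < 6 then (if e < 3 then (if e < 1 then (if c then (if n then (if p then 0 else 1) else (if p then 0 else 1)) else 1) else (if e < 2 then (if c then (if n then (if p then 1 else 0) else (if p then 1 else 0)) else 1) else (if c then 0 else 1))) else (if e < 4 then (if c then 1 else 0) else (if e < 5 then (if c then 1 else 0) else (if c then 1 else 0)))) else (if e < 9 then (if e < 7 then (if c then 0 else 1) else (if e < 8 then (if c then 0 else (if n then 1 else 0)) else (if c then 0 else (if n then 0 else 1)))) else (if e < 11 then (if e < 10 then (if c then 1 else (if n then 0 else 1)) else (if c then (if n then 0 else 1) else (if n then 1 else 0))) else (if e < 12 then (if c then (if n then 1 else 0) else 0) else (if c then (if n then 1 else 0) else (if n then 1 else 0)))))) else (if e < 20 then (if e < 16 then (if e < 14 then (if c then (if n then 0 else 1) else 1) else (if e < 15 then (if c then 0 else (if n then 0 else 1)) else (if c then (if n then 0 else 1) else (if n then 0 else 1)))) else (if e < 18 then (if e < 17 then (if c then 1 else 0) else (if c then (if n then 1 else 0) else (if n then 1 else 0))) else (if e < 19 then (if c then (if n then 1 else 0) else (if n then 0 else 1)) else (if c then 0 else (if n then 1 else 0))))) else (if e < 23 then (if e < 21 then (if c then (if n then 0 else 1) else 1) else (if e < 22 then 1 else (if c then (if n then 0 else 1) else 0))) else (if e < 25 then (if e < 24 then (if c then (if n then 1 else 0) else 0) else (if c then (if n then 1 else 0) else (if n then 1 else 0))) else (if e < 26 then (if c then (if n then 0 else 1) else (if n then 0 else 1)) else (if c then 0 else (if n then 1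 else 0)))))))"

definition FFv :: "nat \<Rightarrow> bool \<Rightarrow> bool \<Rightarrow> bool \<Rightarrow> nat" where "FFv = FFt"

lemma FFv_0_000_0: "FFv 0 False False False = 1" by (simp add: FFv_def FFt_def)
lemma FFv_0_001_0: "FFv 0 False False True = 1" by (simp add: FFv_def FFt_def)
lemma FFv_0_010_0: "FFv 0 False True False = 1" by (simp add: FFv_def FFt_def)
lemma FFv_0_011_0: "FFv 0 False True True = 1" by (simp add: FFv_def FFt_def)
lemma FFv_0_100_0: "FFv 0 True False False = 1" by (simp add: FFv_def FFt_def)
lemma FFv_0_101_0: "FFv 0 True False True = 1" by (simp add: FFv_def FFt_def)
lemma FFv_0_110_0: "FFv 0 True True False = 0" by (simp add: FFv_def FFt_def)
lemma FFv_0_111_0: "FFv 0 True True True = 0" by (simp add: FFv_def FFt_def)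
lemma FFv_1_000_0: "FFv 1 False False False = 1" by (simp add: FFv_def FFt_def)
lemma FFv_1_000_1: "FFv (Suc 0) False False False = 1" by (simp add: FFv_def FFt_def)
lemma FFv_1_001_0: "FFv 1 False False True = 1" by (simp add: FFv_def FFt_def)
lemma FFv_1_001_1: "FFv (Suc 0) False False True = 1" by (simp add: FFv_def FFt_def)
lemma FFv_1_010_0: "FFv 1 False True False = 0" by (simp add: FFv_def FFt_def)
lemma FFv_1_010_1: "FFv (Suc 0) False True False = 0" by (simp add: FFv_def FFt_def)
lemma FFv_1_011_0: "FFv 1 False True True = 0" by (simp add: FFv_def FFt_def)
lemma FFv_1_011_1: "FFv (Suc 0) False True True = 0" by (simp add: FFv_def FFt_def)
lemma FFv_1_100_0: "FFv 1 True False False = 1" by (simp add: FFv_def FFt_def)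
lemma FFv_1_100_1: "FFv (Suc 0) True False False = 1" by (simp add: FFv_def FFt_def)
lemma FFv_1_101_0: "FFv 1 True False True = 1" by (simp add: FFv_def FFt_def)
lemma FFv_1_101_1: "FFv (Suc 0) True False True = 1" by (simp add: FFv_def FFt_def)
lemma FFv_1_110_0: "FFv 1 True True False = 1" by (simp add: FFv_def FFt_def)
lemma FFv_1_110_1: "FFv (Suc 0) True True False = 1" by (simp add: FFv_def FFt_def)
lemma FFv_1_111_0: "FFv 1 True True True = 1" by (simp add: FFv_def FFt_def)
lemma FFv_1_111_1: "FFv (Suc 0) True True True = 1" by (simp add: FFv_def FFt_def)
lemma FFv_2_000_0: "FFv 2 False False False = 1" by (simp add: FFv_def FFt_def)
lemma FFv_2_001_0: "FFv 2 False False True = 1" by (simp add: FFv_def FFt_def)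
lemma FFv_2_010_0: "FFv 2 False True False = 0" by (simp add: FFv_def FFt_def)
lemma FFv_2_011_0: "FFv 2 False True True = 0" by (simp add: FFv_def FFt_def)
lemma FFv_2_100_0: "FFv 2 True False False = 1" by (simp add: FFv_def FFt_def)
lemma FFv_2_101_0: "FFv 2 True False True = 1" by (simp add: FFv_def FFt_def)
lemma FFv_2_110_0: "FFv 2 True True False = 0" by (simp add: FFv_def FFt_def)
lemma FFv_2_111_0: "FFv 2 True True True = 0" by (simp add: FFv_def FFt_def)
lemma FFv_3_000_0: "FFv 3 False False False = 0" by (simp add: FFv_def FFt_def)
lemma FFv_3_001_0: "FFv 3 False False True = 0" by (simp add: FFv_def FFt_def)
lemma FFv_3_010_0: "FFv 3 False True False = 1" by (simp add: FFv_def FFt_def)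
lemma FFv_3_011_0: "FFv 3 False True True = 1" by (simp add: FFv_def FFt_def)
lemma FFv_3_100_0: "FFv 3 True False False = 0" by (simp add: FFv_def FFt_def)
lemma FFv_3_101_0: "FFv 3 True False True = 0" by (simp add: FFv_def FFt_def)
lemma FFv_3_110_0: "FFv 3 True True False = 1" by (simp add: FFv_def FFt_def)
lemma FFv_3_111_0: "FFv 3 True True True = 1" by (simp add: FFv_def FFt_def)
lemma FFv_4_000_0: "FFv 4 False False False = 0" by (simp add: FFv_def FFt_def)
lemma FFv_4_001_0: "FFv 4 False False True = 0" by (simp add: FFv_def FFt_def)
lemma FFv_4_010_0: "FFv 4 False True False = 1" by (simp add: FFv_def FFt_def)
lemma FFv_4_011_0: "FFv 4 False True True = 1" by (simp add: FFv_def FFt_def)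
lemma FFv_4_100_0: "FFv 4 True False False = 0" by (simp add: FFv_def FFt_def)
lemma FFv_4_101_0: "FFv 4 True False True = 0" by (simp add: FFv_def FFt_def)
lemma FFv_4_110_0: "FFv 4 True True False = 1" by (simp add: FFv_def FFt_def)
lemma FFv_4_111_0: "FFv 4 True True True = 1" by (simp add: FFv_def FFt_def)
lemma FFv_5_000_0: "FFv 5 False False False = 0" by (simp add: FFv_def FFt_def)
lemma FFv_5_001_0: "FFv 5 False False True = 0" by (simp add: FFv_def FFt_def)
lemma FFv_5_010_0: "FFv 5 False True False = 1" by (simp add: FFv_def FFt_def)
lemma FFv_5_011_0: "FFv 5 False True True = 1" by (simp add: FFv_def FFt_def)
lemma FFv_5_100_0: "FFv 5 True False False = 0" by (simp add: FFv_def FFt_def)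
lemma FFv_5_101_0: "FFv 5 True False True = 0" by (simp add: FFv_def FFt_def)
lemma FFv_5_110_0: "FFv 5 True True False = 1" by (simp add: FFv_def FFt_def)
lemma FFv_5_111_0: "FFv 5 True True True = 1" by (simp add: FFv_def FFt_def)
lemma FFv_6_000_0: "FFv 6 False False False = 1" by (simp add: FFv_def FFt_def)
lemma FFv_6_001_0: "FFv 6 False False True = 1" by (simp add: FFv_def FFt_def)
lemma FFv_6_010_0: "FFv 6 False True False = 0" by (simp add: FFv_def FFt_def)
lemma FFv_6_011_0: "FFv 6 False True True = 0" by (simp add: FFv_def FFt_def)
lemma FFv_6_100_0: "FFv 6 True False False = 1" by (simp add: FFv_def FFt_def)
lemma FFv_6_101_0: "FFv 6 True False True = 1" by (simp add: FFv_def FFt_def)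
lemma FFv_6_110_0: "FFv 6 True True False = 0" by (simp add: FFv_def FFt_def)
lemma FFv_6_111_0: "FFv 6 True True True = 0" by (simp add: FFv_def FFt_def)
lemma FFv_7_000_0: "FFv 7 False False False = 0" by (simp add: FFv_def FFt_def)
lemma FFv_7_001_0: "FFv 7 False False True = 1" by (simp add: FFv_def FFt_def)
lemma FFv_7_010_0: "FFv 7 False True False = 0" by (simp add: FFv_def FFt_def)
lemma FFv_7_011_0: "FFv 7 False True True = 0" by (simp add: FFv_def FFt_def)
lemma FFv_7_100_0: "FFv 7 True False False = 0" by (simp add: FFv_def FFt_def)
lemma FFv_7_101_0: "FFv 7 True False True = 1" by (simp add: FFv_def FFt_def)
lemma FFv_7_110_0: "FFv 7 True True False = 0" by (simp add: FFv_def FFt_def)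
lemma FFv_7_111_0: "FFv 7 True True True = 0" by (simp add: FFv_def FFt_def)
lemma FFv_8_000_0: "FFv 8 False False False = 1" by (simp add: FFv_def FFt_def)
lemma FFv_8_001_0: "FFv 8 False False True = 0" by (simp add: FFv_def FFt_def)
lemma FFv_8_010_0: "FFv 8 False True False = 0" by (simp add: FFv_def FFt_def)
lemma FFv_8_011_0: "FFv 8 False True True = 0" by (simp add: FFv_def FFt_def)
lemma FFv_8_100_0: "FFv 8 True False False = 1" by (simp add: FFv_def FFt_def)
lemma FFv_8_101_0: "FFv 8 True False True = 0" by (simp add: FFv_def FFt_def)
lemma FFv_8_110_0: "FFv 8 True True False = 0" by (simp add: FFv_def FFt_def)
lemma FFv_8_111_0: "FFv 8 True True True = 0" by (simp add: FFv_def FFt_def)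
lemma FFv_9_000_0: "FFv 9 False False False = 1" by (simp add: FFv_def FFt_def)
lemma FFv_9_001_0: "FFv 9 False False True = 0" by (simp add: FFv_def FFt_def)
lemma FFv_9_010_0: "FFv 9 False True False = 1" by (simp add: FFv_def FFt_def)
lemma FFv_9_011_0: "FFv 9 False True True = 1" by (simp add: FFv_def FFt_def)
lemma FFv_9_100_0: "FFv 9 True False False = 1" by (simp add: FFv_def FFt_def)
lemma FFv_9_101_0: "FFv 9 True False True = 0" by (simp add: FFv_def FFt_def)
lemma FFv_9_110_0: "FFv 9 True True False = 1" by (simp add: FFv_def FFt_def)
lemma FFv_9_111_0: "FFv 9 True True True = 1" by (simp add: FFv_def FFt_def)
lemma FFv_10_000_0: "FFv 10 False False False = 0" by (simp add: FFv_def FFt_def)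
lemma FFv_10_001_0: "FFv 10 False False True = 1" by (simp add: FFv_def FFt_def)
lemma FFv_10_010_0: "FFv 10 False True False = 1" by (simp add: FFv_def FFt_def)
lemma FFv_10_011_0: "FFv 10 False True True = 0" by (simp add: FFv_def FFt_def)
lemma FFv_10_100_0: "FFv 10 True False False = 0" by (simp add: FFv_def FFt_def)
lemma FFv_10_101_0: "FFv 10 True False True = 1" by (simp add: FFv_def FFt_def)
lemma FFv_10_110_0: "FFv 10 True True False = 1" by (simp add: FFv_def FFt_def)
lemma FFv_10_111_0: "FFv 10 True True True = 0" by (simp add: FFv_def FFt_def)
lemma FFv_11_000_0: "FFv 11 False False False = 0" by (simp add: FFv_def FFt_def)
lemma FFv_11_001_0: "FFv 11 False False True = 0" by (simp add: FFv_def FFt_def)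
lemma FFv_11_010_0: "FFv 11 False True False = 0" by (simp add: FFv_def FFt_def)
lemma FFv_11_011_0: "FFv 11 False True True = 1" by (simp add: FFv_def FFt_def)
lemma FFv_11_100_0: "FFv 11 True False False = 0" by (simp add: FFv_def FFt_def)
lemma FFv_11_101_0: "FFv 11 True False True = 0" by (simp add: FFv_def FFt_def)
lemma FFv_11_110_0: "FFv 11 True True False = 0" by (simp add: FFv_def FFt_def)
lemma FFv_11_111_0: "FFv 11 True True True = 1" by (simp add: FFv_def FFt_def)
lemma FFv_12_000_0: "FFv 12 False False False = 0" by (simp add: FFv_def FFt_def)
lemma FFv_12_001_0: "FFv 12 False False True = 1" by (simp add: FFv_def FFt_def)
lemma FFv_12_010_0: "FFv 12 False True False = 0" by (simp add: FFv_def FFt_def)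
lemma FFv_12_011_0: "FFv 12 False True True = 1" by (simp add: FFv_def FFt_def)
lemma FFv_12_100_0: "FFv 12 True False False = 0" by (simp add: FFv_def FFt_def)
lemma FFv_12_101_0: "FFv 12 True False True = 1" by (simp add: FFv_def FFt_def)
lemma FFv_12_110_0: "FFv 12 True True False = 0" by (simp add: FFv_def FFt_def)
lemma FFv_12_111_0: "FFv 12 True True True = 1" by (simp add: FFv_def FFt_def)
lemma FFv_13_000_0: "FFv 13 False False False = 1" by (simp add: FFv_def FFt_def)
lemma FFv_13_001_0: "FFv 13 False False True = 1" by (simp add: FFv_def FFt_def)
lemma FFv_13_010_0: "FFv 13 False True False = 1" by (simp add: FFv_def FFt_def)
lemma FFv_13_011_0: "FFv 13 False True True = 0" by (simp add: FFv_def FFt_def)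
lemma FFv_13_100_0: "FFv 13 True False False = 1" by (simp add: FFv_def FFt_def)
lemma FFv_13_101_0: "FFv 13 True False True = 1" by (simp add: FFv_def FFt_def)
lemma FFv_13_110_0: "FFv 13 True True False = 1" by (simp add: FFv_def FFt_def)
lemma FFv_13_111_0: "FFv 13 True True True = 0" by (simp add: FFv_def FFt_def)
lemma FFv_14_000_0: "FFv 14 False False False = 1" by (simp add: FFv_def FFt_def)
lemma FFv_14_001_0: "FFv 14 False False True = 0" by (simp add: FFv_def FFt_def)
lemma FFv_14_010_0: "FFv 14 False True False = 0" by (simp add: FFv_def FFt_def)
lemma FFv_14_011_0: "FFv 14 False True True = 0" by (simp add: FFv_def FFt_def)
lemma FFv_14_100_0: "FFv 14 True False False = 1" by (simp add: FFv_def FFt_def)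
lemma FFv_14_101_0: "FFv 14 True False True = 0" by (simp add: FFv_def FFt_def)
lemma FFv_14_110_0: "FFv 14 True True False = 0" by (simp add: FFv_def FFt_def)
lemma FFv_14_111_0: "FFv 14 True True True = 0" by (simp add: FFv_def FFt_def)
lemma FFv_15_000_0: "FFv 15 False False False = 1" by (simp add: FFv_def FFt_def)
lemma FFv_15_001_0: "FFv 15 False False True = 0" by (simp add: FFv_def FFt_def)
lemma FFv_15_010_0: "FFv 15 False True False = 1" by (simp add: FFv_def FFt_def)
lemma FFv_15_011_0: "FFv 15 False True True = 0" by (simp add: FFv_def FFt_def)
lemma FFv_15_100_0: "FFv 15 True False False = 1" by (simp add: FFv_def FFt_def)
lemma FFv_15_101_0: "FFv 15 True False True = 0" by (simp add: FFv_def FFt_def)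
lemma FFv_15_110_0: "FFv 15 True True False = 1" by (simp add: FFv_def FFt_def)
lemma FFv_15_111_0: "FFv 15 True True True = 0" by (simp add: FFv_def FFt_def)
lemma FFv_16_000_0: "FFv 16 False False False = 0" by (simp add: FFv_def FFt_def)
lemma FFv_16_001_0: "FFv 16 False False True = 0" by (simp add: FFv_def FFt_def)
lemma FFv_16_010_0: "FFv 16 False True False = 1" by (simp add: FFv_def FFt_def)
lemma FFv_16_011_0: "FFv 16 False True True = 1" by (simp add: FFv_def FFt_def)
lemma FFv_16_100_0: "FFv 16 True False False = 0" by (simp add: FFv_def FFt_def)
lemma FFv_16_101_0: "FFv 16 True False True = 0" by (simp add: FFv_def FFt_def)
lemma FFv_16_110_0: "FFv 16 True True False = 1" by (simp add: FFv_def FFt_def)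
lemma FFv_16_111_0: "FFv 16 True True True = 1" by (simp add: FFv_def FFt_def)
lemma FFv_17_000_0: "FFv 17 False False False = 0" by (simp add: FFv_def FFt_def)
lemma FFv_17_001_0: "FFv 17 False False True = 1" by (simp add: FFv_def FFt_def)
lemma FFv_17_010_0: "FFv 17 False True False = 0" by (simp add: FFv_def FFt_def)
lemma FFv_17_011_0: "FFv 17 False True True = 1" by (simp add: FFv_def FFt_def)
lemma FFv_17_100_0: "FFv 17 True False False = 0" by (simp add: FFv_def FFt_def)
lemma FFv_17_101_0: "FFv 17 True False True = 1" by (simp add: FFv_def FFt_def)
lemma FFv_17_110_0: "FFv 17 True True False = 0" by (simp add: FFv_def FFt_def)
lemma FFv_17_111_0: "FFv 17 True True True = 1" by (simp add: FFv_def FFt_def)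
lemma FFv_18_000_0: "FFv 18 False False False = 1" by (simp add: FFv_def FFt_def)
lemma FFv_18_001_0: "FFv 18 False False True = 0" by (simp add: FFv_def FFt_def)
lemma FFv_18_010_0: "FFv 18 False True False = 0" by (simp add: FFv_def FFt_def)
lemma FFv_18_011_0: "FFv 18 False True True = 1" by (simp add: FFv_def FFt_def)
lemma FFv_18_100_0: "FFv 18 True False False = 1" by (simp add: FFv_def FFt_def)
lemma FFv_18_101_0: "FFv 18 True False True = 0" by (simp add: FFv_def FFt_def)
lemma FFv_18_110_0: "FFv 18 True True False = 0" by (simp add: FFv_def FFt_def)
lemma FFv_18_111_0: "FFv 18 True True True = 1" by (simp add: FFv_def FFt_def)
lemma FFv_19_000_0: "FFv 19 False False False = 0" by (simp add: FFv_def FFt_def)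
lemma FFv_19_001_0: "FFv 19 False False True = 1" by (simp add: FFv_def FFt_def)
lemma FFv_19_010_0: "FFv 19 False True False = 0" by (simp add: FFv_def FFt_def)
lemma FFv_19_011_0: "FFv 19 False True True = 0" by (simp add: FFv_def FFt_def)
lemma FFv_19_100_0: "FFv 19 True False False = 0" by (simp add: FFv_def FFt_def)
lemma FFv_19_101_0: "FFv 19 True False True = 1" by (simp add: FFv_def FFt_def)
lemma FFv_19_110_0: "FFv 19 True True False = 0" by (simp add: FFv_def FFt_def)
lemma FFv_19_111_0: "FFv 19 True True True = 0" by (simp add: FFv_def FFt_def)
lemma FFv_20_000_0: "FFv 20 False False False = 1" by (simp add: FFv_def FFt_def)
lemma FFv_20_001_0: "FFv 20 False False True = 1" by (simp add: FFv_def FFt_def)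
lemma FFv_20_010_0: "FFv 20 False True False = 1" by (simp add: FFv_def FFt_def)
lemma FFv_20_011_0: "FFv 20 False True True = 0" by (simp add: FFv_def FFt_def)
lemma FFv_20_100_0: "FFv 20 True False False = 1" by (simp add: FFv_def FFt_def)
lemma FFv_20_101_0: "FFv 20 True False True = 1" by (simp add: FFv_def FFt_def)
lemma FFv_20_110_0: "FFv 20 True True False = 1" by (simp add: FFv_def FFt_def)
lemma FFv_20_111_0: "FFv 20 True True True = 0" by (simp add: FFv_def FFt_def)
lemma FFv_21_000_0: "FFv 21 False False False = 1" by (simp add: FFv_def FFt_def)
lemma FFv_21_001_0: "FFv 21 False False True = 1" by (simp add: FFv_def FFt_def)
lemma FFv_21_010_0: "FFv 21 False True False = 1" by (simp add: FFv_def FFt_def)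
lemma FFv_21_011_0: "FFv 21 False True True = 1" by (simp add: FFv_def FFt_def)
lemma FFv_21_100_0: "FFv 21 True False False = 1" by (simp add: FFv_def FFt_def)
lemma FFv_21_101_0: "FFv 21 True False True = 1" by (simp add: FFv_def FFt_def)
lemma FFv_21_110_0: "FFv 21 True True False = 1" by (simp add: FFv_def FFt_def)
lemma FFv_21_111_0: "FFv 21 True True True = 1" by (simp add: FFv_def FFt_def)
lemma FFv_22_000_0: "FFv 22 False False False = 0" by (simp add: FFv_def FFt_def)
lemma FFv_22_001_0: "FFv 22 False False True = 0" by (simp add: FFv_def FFt_def)
lemma FFv_22_010_0: "FFv 22 False True False = 1" by (simp add: FFv_def FFt_def)
lemma FFv_22_011_0: "FFv 22 False True True = 0" by (simp add: FFv_def FFt_def)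
lemma FFv_22_100_0: "FFv 22 True False False = 0" by (simp add: FFv_def FFt_def)
lemma FFv_22_101_0: "FFv 22 True False True = 0" by (simp add: FFv_def FFt_def)
lemma FFv_22_110_0: "FFv 22 True True False = 1" by (simp add: FFv_def FFt_def)
lemma FFv_22_111_0: "FFv 22 True True True = 0" by (simp add: FFv_def FFt_def)
lemma FFv_23_000_0: "FFv 23 False False False = 0" by (simp add: FFv_def FFt_def)
lemma FFv_23_001_0: "FFv 23 False False True = 0" by (simp add: FFv_def FFt_def)
lemma FFv_23_010_0: "FFv 23 False True False = 0" by (simp add: FFv_def FFt_def)
lemma FFv_23_011_0: "FFv 23 False True True = 1" by (simp add: FFv_def FFt_def)
lemma FFv_23_100_0: "FFv 23 True False False = 0" by (simp add: FFv_def FFt_def)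
lemma FFv_23_101_0: "FFv 23 True False True = 0" by (simp add: FFv_def FFt_def)
lemma FFv_23_110_0: "FFv 23 True True False = 0" by (simp add: FFv_def FFt_def)
lemma FFv_23_111_0: "FFv 23 True True True = 1" by (simp add: FFv_def FFt_def)
lemma FFv_24_000_0: "FFv 24 False False False = 0" by (simp add: FFv_def FFt_def)
lemma FFv_24_001_0: "FFv 24 False False True = 1" by (simp add: FFv_def FFt_def)
lemma FFv_24_010_0: "FFv 24 False True False = 0" by (simp add: FFv_def FFt_def)
lemma FFv_24_011_0: "FFv 24 False True True = 1" by (simp add: FFv_def FFt_def)
lemma FFv_24_100_0: "FFv 24 True False False = 0" by (simp add: FFv_def FFt_def)
lemma FFv_24_101_0: "FFv 24 True False True = 1" by (simp add: FFv_def FFt_def)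
lemma FFv_24_110_0: "FFv 24 True True False = 0" by (simp add: FFv_def FFt_def)
lemma FFv_24_111_0: "FFv 24 True True True = 1" by (simp add: FFv_def FFt_def)
lemma FFv_25_000_0: "FFv 25 False False False = 1" by (simp add: FFv_def FFt_def)
lemma FFv_25_001_0: "FFv 25 False False True = 0" by (simp add: FFv_def FFt_def)
lemma FFv_25_010_0: "FFv 25 False True False = 1" by (simp add: FFv_def FFt_def)
lemma FFv_25_011_0: "FFv 25 False True True = 0" by (simp add: FFv_def FFt_def)
lemma FFv_25_100_0: "FFv 25 True False False = 1" by (simp add: FFv_def FFt_def)
lemma FFv_25_101_0: "FFv 25 True False True = 0" by (simp add: FFv_def FFt_def)
lemma FFv_25_110_0: "FFv 25 True True False = 1" by (simp add: FFv_def FFt_def)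
lemma FFv_25_111_0: "FFv 25 True True True = 0" by (simp add: FFv_def FFt_def)
lemma FFv_26_000_0: "FFv 26 False False False = 0" by (simp add: FFv_def FFt_def)
lemma FFv_26_001_0: "FFv 26 False False True = 1" by (simp add: FFv_def FFt_def)
lemma FFv_26_010_0: "FFv 26 False True False = 0" by (simp add: FFv_def FFt_def)
lemma FFv_26_011_0: "FFv 26 False True True = 0" by (simp add: FFv_def FFt_def)
lemma FFv_26_100_0: "FFv 26 True False False = 0" by (simp add: FFv_def FFt_def)
lemma FFv_26_101_0: "FFv 26 True False True = 1" by (simp add: FFv_def FFt_def)
lemma FFv_26_110_0: "FFv 26 True True False = 0" by (simp add: FFv_def FFt_def)
lemma FFv_26_111_0: "FFv 26 True True True = 0" by (simp add: FFv_def FFt_def)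

lemmas FFv_tab = FFv_0_000_0 FFv_0_001_0 FFv_0_010_0 FFv_0_011_0 FFv_0_100_0 FFv_0_101_0 FFv_0_110_0 FFv_0_111_0 FFv_1_000_0 FFv_1_000_1 FFv_1_001_0 FFv_1_001_1 FFv_1_010_0 FFv_1_010_1 FFv_1_011_0 FFv_1_011_1 FFv_1_100_0 FFv_1_100_1 FFv_1_101_0 FFv_1_101_1 FFv_1_110_0 FFv_1_110_1 FFv_1_111_0 FFv_1_111_1 FFv_2_000_0 FFv_2_001_0 FFv_2_010_0 FFv_2_011_0 FFv_2_100_0 FFv_2_101_0 FFv_2_110_0 FFv_2_111_0 FFv_3_000_0 FFv_3_001_0 FFv_3_010_0 FFv_3_011_0 FFv_3_100_0 FFv_3_101_0 FFv_3_110_0 FFv_3_111_0 FFv_4_000_0 FFv_4_001_0 FFv_4_010_0 FFv_4_011_0 FFv_4_100_0 FFv_4_101_0 FFv_4_110_0 FFv_4_111_0 FFv_5_000_0 FFv_5_001_0 FFv_5_010_0 FFv_5_011_0 FFv_5_100_0 FFv_5_101_0 FFv_5_110_0 FFv_5_111_0 FFv_6_000_0 FFv_6_001_0 FFv_6_010_0 FFv_6_011_0 FFv_6_100_0 FFv_6_101_0 FFv_6_110_0 FFv_6_111_0 FFv_7_000_0 FFv_7_001_0 FFv_7_010_0 FFv_7_011_0 FFv_7_100_0 FFv_7_101_0 FFv_7_110_0 FFv_7_111_0 FFv_8_000_0 FFv_8_001_0 FFv_8_010_0 FFv_8_011_0 FFv_8_100_0 FFv_8_101_0 FFv_8_110_0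 FFv_8_111_0 FFv_9_000_0 FFv_9_001_0 FFv_9_010_0 FFv_9_011_0 FFv_9_100_0 FFv_9_101_0 FFv_9_110_0 FFv_9_111_0 FFv_10_000_0 FFv_10_001_0 FFv_10_010_0 FFv_10_011_0 FFv_10_100_0 FFv_10_101_0 FFv_10_110_0 FFv_10_111_0 FFv_11_000_0 FFv_11_001_0 FFv_11_010_0 FFv_11_011_0 FFv_11_100_0 FFv_11_101_0 FFv_11_110_0 FFv_11_111_0 FFv_12_000_0 FFv_12_001_0 FFv_12_010_0 FFv_12_011_0 FFv_12_100_0 FFv_12_101_0 FFv_12_110_0 FFv_12_111_0 FFv_13_000_0 FFv_13_001_0 FFv_13_010_0 FFv_13_011_0 FFv_13_100_0 FFv_13_101_0 FFv_13_110_0 FFv_13_111_0 FFv_14_000_0 FFv_14_001_0 FFv_14_010_0 FFv_14_011_0 FFv_14_100_0 FFv_14_101_0 FFv_14_110_0 FFv_14_111_0 FFv_15_000_0 FFv_15_001_0 FFv_15_010_0 FFv_15_011_0 FFv_15_100_0 FFv_15_101_0 FFv_15_110_0 FFv_15_111_0 FFv_16_000_0 FFv_16_001_0 FFv_16_010_0 FFv_16_011_0 FFv_16_100_0 FFv_16_101_0 FFv_16_110_0 FFv_16_111_0 FFv_17_000_0 FFv_17_001_0 FFv_17_010_0 FFv_17_011_0 FFv_17_100_0 FFv_17_101_0 FFv_17_110_0 FFv_17_111_0 FFv_18_000_0 FFv_18_001_0 FFv_18_010_0 FFv_18_011_0 FFv_18_100_0 FFv_18_101_0 FFv_18_110_0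 FFv_18_111_0 FFv_19_000_0 FFv_19_001_0 FFv_19_010_0 FFv_19_011_0 FFv_19_100_0 FFv_19_101_0 FFv_19_110_0 FFv_19_111_0 FFv_20_000_0 FFv_20_001_0 FFv_20_010_0 FFv_20_011_0 FFv_20_100_0 FFv_20_101_0 FFv_20_110_0 FFv_20_111_0 FFv_21_000_0 FFv_21_001_0 FFv_21_010_0 FFv_21_011_0 FFv_21_100_0 FFv_21_101_0 FFv_21_110_0 FFv_21_111_0 FFv_22_000_0 FFv_22_001_0 FFv_22_010_0 FFv_22_011_0 FFv_22_100_0 FFv_22_101_0 FFv_22_110_0 FFv_22_111_0 FFv_23_000_0 FFv_23_001_0 FFv_23_010_0 FFv_23_011_0 FFv_23_100_0 FFv_23_101_0 FFv_23_110_0 FFv_23_111_0 FFv_24_000_0 FFv_24_001_0 FFv_24_010_0 FFv_24_011_0 FFv_24_100_0 FFv_24_101_0 FFv_24_110_0 FFv_24_111_0 FFv_25_000_0 FFv_25_001_0 FFv_25_010_0 FFv_25_011_0 FFv_25_100_0 FFv_25_101_0 FFv_25_110_0 FFv_25_111_0 FFv_26_000_0 FFv_26_001_0 FFv_26_010_0 FFv_26_011_0 FFv_26_100_0 FFv_26_101_0 FFv_26_110_0 FFv_26_111_0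


lemma FF_FFv: "e < 27 \<Longrightarrow> FF e p c n = FFv e p c n"
proof -
  assume e: "e < 27"
  have "list_all (\<lambda>e. FF e p c n = FFv e p c n) [0,1,2,3,4,5,6,7,8,9,10,11,12,13,14,15,16,17,18,19,20,21,22,23,24,25,26]"
    by (cases p; cases c; cases n) (simp_all add: FF_def zeta_def lett_def b2n_def FFv_tab)
  then show ?thesis using e unfolding all27[symmetric] by blast
qed

lemma FFv_le1: "e < 27 \<Longrightarrow> FFv e p c n \<le> 1"
proof -
  assume e: "e < 27"
  have "list_all (\<lambda>e. FFv e p c n \<le> 1) [0,1,2,3,4,5,6,7,8,9,10,11,12,13,14,15,16,17,18,19,20,21,22,23,24,25,26]"
    by (cases p; cases c; cases n) (simp_all add: FFv_tab)
  then show ?thesis using e unfolding all27[symmetric] by blast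
qed

fun lex :: "(nat \<Rightarrow> bool) \<Rightarrow> nat list \<Rightarrow> bool" where
  "lex P [] = False"
| "lex P (x # xs) = (if P x then True else lex P xs)"

lemma lex_iff: "lex P xs \<longleftrightarrow> (\<exists>x\<in>set xs. P x)"
  by (induction xs) auto

lemma set27: "set [0,1,2,3,4,5,6,7,8,9,10,11,12,13,14,15,16,17,18,19,20,21,22,23,24,25,26] = {..<(27::nat)}"
  unfolding upt27[symmetric] by auto

definition nt3 :: "bool \<Rightarrow> bool \<Rightarrow> bool \<Rightarrow> bool" where "nt3 a b c = (\<not> (a = b \<and> b = c))"

definition EQI :: "nat \<Rightarrow> bool \<Rightarrow> bool \<Rightarrow> bool \<Rightarrow> bool \<Rightarrow> bool \<Rightarrow> bool \<Rightarrow> bool \<Rightarrow> nat \<Rightarrow> bool" where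
  "EQI r a0 a1 a2 b0 b1 b2 b3 e = (FFv e a0 a1 a2 = (if e + r < 27 then FFv (e+r) b0 b1 b2 else FFv (e+r-27) b1 b2 b3))"

definition concI :: "nat \<Rightarrow> bool \<Rightarrow> bool \<Rightarrow> bool \<Rightarrow> bool \<Rightarrow> bool \<Rightarrow> bool \<Rightarrow> bool \<Rightarrow> bool" where
  "concI r a0 a1 a2 b0 b1 b2 b3 = ((r = 0 \<and> a1 = b1 \<and> a2 = b2 \<and> (a1 \<longrightarrow> a0 = b0)) \<or>
      (r = 3 \<and> a0 \<and> \<not> a1 \<and> \<not> a2 \<and> \<not> b0 \<and> b1 \<and> b2 \<and> \<not> b3))"

definition chkI :: "nat \<Rightarrow> bool \<Rightarrow> bool \<Rightarrow> bool \<Rightarrow> bool \<Rightarrow> bool \<Rightarrow> bool \<Rightarrow> bool \<Rightarrow> bool" where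
  "chkI r a0 a1 a2 b0 b1 b2 b3 = (if nt3 a0 a1 a2 \<and> nt3 b0 b1 b2 \<and> nt3 b1 b2 b3 \<and> \<not> concI r a0 a1 a2 b0 b1 b2 b3
     then lex (\<lambda>e. \<not> EQI r a0 a1 a2 b0 b1 b2 b3 e) [0,1,2,3,4,5,6,7,8,9,10,11,12,13,14,15,16,17,18,19,20,21,22,23,24,25,26] else True)"

lemma chkI_all: "list_all (\<lambda>r. chkI r a0 a1 a2 b0 b1 b2 b3) [0,1,2,3,4,5,6,7,8,9,10,11,12,13,14,15,16,17,18,19,20,21,22,23,24,25,26]"
  by (cases a0; cases a1; cases a2; cases b0; cases b1; cases b2; cases b3)
     (simp_all del: One_nat_def add: One_nat_def[symmetric] Suc_1 add: chkI_def nt3_def concI_def EQI_def FFv_tab)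

lemma int_lemma:
  assumes "r < 27" "nt3 a0 a1 a2" "nt3 b0 b1 b2" "nt3 b1 b2 b3" "\<forall>e<27. EQI r a0 a1 a2 b0 b1 b2 b3 e"
  shows "concI r a0 a1 a2 b0 b1 b2 b3"
proof (rule ccontr)
  assume nc: "\<not> concI r a0 a1 a2 b0 b1 b2 b3"
  have "chkI r a0 a1 a2 b0 b1 b2 b3" using chkI_all[of a0 a1 a2 b0 b1 b2 b3] assms(1)
    unfolding list_all_iff set27 by blast
  then have "lex (\<lambda>e. \<not> EQI r a0 a1 a2 b0 b1 b2 b3 e) [0,1,2,3,4,5,6,7,8,9,10,11,12,13,14,15,16,17,18,19,20,21,22,23,24,25,26]" using assms nc unfolding chkI_def by simp
  then show False using assms(5) unfolding lex_iff set27 by blast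
qed

definition chkE :: "bool \<Rightarrow> bool \<Rightarrow> bool \<Rightarrow> bool \<Rightarrow> bool \<Rightarrow> bool" where
  "chkE A B E Fv G = (if nt3 A B False \<and> nt3 E Fv False \<and> nt3 E Fv G \<and> B \<noteq> Fv \<and> G \<noteq> False then
     lex (\<lambda>e1. FFv e1 A B False \<noteq> FFv e1 E Fv False \<and>
        lex (\<lambda>e2. e2 \<le> e1 \<and> FFv e2 E Fv False \<noteq> FFv e2 E Fv G) [0,1,2,3,4,5,6,7,8,9,10,11,12,13,14,15,16,17,18,19,20,21,22,23,24,25,26]) [0,1,2,3,4,5,6,7,8,9,10,11,12,13,14,15,16,17,18,19,20,21,22,23,24,25,26] else True)"

lemma chkE_all: "chkE A B E Fv G"
  by (cases A; cases B; cases E; cases Fv; cases G) (simp_all del: One_nat_def add: One_nat_def[symmetric] Suc_1 add: chkE_def nt3_def FFv_tab)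

lemma end_lemma:
  assumes "1 \<le> e0" "e0 < 27" "nt3 A B False" "nt3 E Fv False" "nt3 E Fv G"
    and c1: "\<forall>e. e0 \<le> e \<and> e < 27 \<longrightarrow> FFv e A B False = FFv e E Fv False"
    and c2: "\<forall>e<e0. FFv e E Fv False = FFv e E Fv G"
  shows "B = Fv \<or> G = False"
proof (rule ccontr)
  assume nc: "\<not> (B = Fv \<or> G = False)"
  have "lex (\<lambda>e1. FFv e1 A B False \<noteq> FFv e1 E Fv False \<and>
        lex (\<lambda>e2. e2 \<le> e1 \<and> FFv e2 E Fv False \<noteq> FFv e2 E Fv G) [0,1,2,3,4,5,6,7,8,9,10,11,12,13,14,15,16,17,18,19,20,21,22,23,24,25,26]) [0,1,2,3,4,5,6,7,8,9,10,11,12,13,14,15,16,17,18,19,20,21,22,23,24,25,26]"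
    using chkE_all[of A B E Fv G] assms nc unfolding chkE_def by auto
  then obtain e1 e2 where e: "e1 < 27" "FFv e1 A B False \<noteq> FFv e1 E Fv False" "e2 \<le> e1"
      "FFv e2 E Fv False \<noteq> FFv e2 E Fv G"
    unfolding lex_iff set27 by auto
  show False
  proof (cases "e0 \<le> e1")
    case True then show False using c1 e by blast
  next
    case False then show False using c2 e by auto
  qed
qed

definition D0t :: "nat \<Rightarrow> nat" where "D0t q = (if q < 44 then (if q < 22 then (if q < 11 then (if q < 5 then (if q < 2 then (if q < 1 then 0 else 2) else (if q < 3 then 4 else (if q < 4 then 6 else 8))) else (if q < 8 then (if q < 6 then 10 else (if q < 7 then 12 else 14)) else (if q < 9 then 16 else (if q < 10 then 18 else 20)))) else (if q < 16 then (if q < 13 then (if q < 12 then 22 else 24) else (if q < 14 then 26 else (if q < 15 then 28 else 30))) else (if q < 19 then (if q < 17 then 32 else (if q < 18 then 34 else 36)) else (if q < 20 then 55 else (if q < 21 then 57 else 58))))) else (if q < 33 then (if q < 27 then (if q < 24 then (if q < 23 then 59 else 61) else (if q < 25 then 63 else (if q < 26 then 65 else 67))) else (if q < 30 then (if q < 28 then 86 else (if q < 29 then 29 else 31)) else (if q < 31 then 33 else (if q < 32 then 35 else 37)))) else (if q < 38 then (if q < 35 then (if q < 34 then 39 else 41) else (if q < 36 then 43 else (if q < 37 then 45 else 47))) else (if q < 41 then (if q < 39 then 49 else (if q < 40 then 51 else 53)) else (if q < 42 then 1 else (if q < 43 then 3 else 5)))))) else (if q < 66 then (if q < 55 then (if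 q < 49 then (if q < 46 then (if q < 45 then 69 else 71) else (if q < 47 then 11 else (if q < 48 then 13 else 75))) else (if q < 52 then (if q < 50 then 76 else (if q < 51 then 78 else 80)) else (if q < 53 then 82 else (if q < 54 then 84 else 47)))) else (if q < 60 then (if q < 57 then (if q < 56 then 49 else 51) else (if q < 58 then 53 else (if q < 59 then 3 else 7))) else (if q < 63 then (if q < 61 then 9 else (if q < 62 then 11 else 13)) else (if q < 64 then 15 else (if q < 65 then 17 else 19))))) else (if q < 77 then (if q < 71 then (if q < 68 then (if q < 67 then 21 else 23) else (if q < 69 then 25 else (if q < 70 then 14 else 16))) else (if q < 74 then (if q < 72 then 18 else (if q < 73 then 20 else 24)) else (if q < 75 then 28 else (if q < 76 then 30 else 34)))) else (if q < 82 then (if q < 79 then (if q < 78 then 36 else 38) else (if q < 80 then 40 else (if q < 81 then 42 else 44))) else (if q < 85 then (if q < 83 then 46 else (if q < 84 then 48 else 50)) else (if q < 86 then 52 else (if q < 87 then 27 else 29)))))))"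

definition D1t :: "nat \<Rightarrow> nat" where "D1t q = (if q < 44 then (if q < 22 then (if q < 11 then (if q < 5 then (if q < 2 then (if q < 1 then 1 else 3) else (if q < 3 then 5 else (if q < 4 then 7 else 9))) else (if q < 8 then (if q < 6 then 11 else (if q < 7 then 13 else 15)) else (if q < 9 then 17 else (if q < 10 then 19 else 21)))) else (if q < 16 then (if q < 13 then (if q < 12 then 23 else 25) else (if q < 14 then 27 else (if q < 15 then 29 else 31))) else (if q < 19 then (if q < 17 then 33 else (if q < 18 then 35 else 54)) else (if q < 20 then 56 else (if q < 21 then 41 else 43))))) else (if q < 33 then (if q < 27 then (if q < 24 then (if q < 23 then 60 else 62) else (if q < 25 then 64 else (if q < 26 then 66 else 68))) else (if q < 30 then (if q < 28 then 87 else (if q < 29 then 30 else 32)) else (if q < 31 then 34 else (if q < 32 then 36 else 38)))) else (if q < 38 then (if q < 35 then (if q < 34 then 40 else 42) else (if q < 36 then 44 else (if q < 37 then 46 else 48))) else (if q < 41 then (if q < 39 then 50 else (if q < 40 then 52 else 0)) else (if q < 42 then 2 else (if q < 43 then 4 else 6)))))) else (if q < 66 then (if q < 55 then (if q < 49 then (if q < 46 then (if q < 45 then 70 else 72) else (if q < 47 then 73 else (if q < 48 then 74 else 16))) else (if q < 52 then (if q < 50 then 77 else (if q < 51 then 79 else 81)) else (if q < 53 then 83 else (if q < 54 then 85 else 48)))) else (if q < 60 then (if q < 57 then (if q < 56 then 50 else 52) else (if q < 58 then 0 else (if q < 59 then 4 else 8))) else (if q < 63 then (if q < 61 then 10 else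 (if q < 62 then 12 else 14)) else (if q < 64 then 16 else (if q < 65 then 18 else 20))))) else (if q < 77 then (if q < 71 then (if q < 68 then (if q < 67 then 22 else 24) else (if q < 69 then 26 else (if q < 70 then 15 else 17))) else (if q < 74 then (if q < 72 then 19 else (if q < 73 then 21 else 25)) else (if q < 75 then 29 else (if q < 76 then 31 else 35)))) else (if q < 82 then (if q < 79 then (if q < 78 then 37 else 39) else (if q < 80 then 41 else (if q < 81 then 43 else 45))) else (if q < 85 then (if q < 83 then 47 else (if q < 84 then 49 else 51)) else (if q < 86 then 53 else (if q < 87 then 28 else 30)))))))"

definition OLt :: "nat \<Rightarrow> nat" where "OLt q = (if q < 44 then (if q < 22 then (if q < 11 then (if q < 5 then (if q < 2 then 1 else (if q < 3 then 1 else 0)) else (if q < 8 then (if q < 6 then 0 else 1) else (if q < 9 then 0 else (if q < 10 then 0 else 1)))) else (if q < 16 then (if q < 13 then (if q < 12 then 0 else 1) else (if q < 14 then 1 else 0)) else (if q < 19 then (if q < 17 then 0 else (if q < 18 then 1 else 0)) else 1))) else (if q < 33 then (if q < 27 then (if q < 24 then 0 else (if q < 25 then 1 else (if q < 26 then 0 else 1))) else (if q < 30 then (if q < 28 then 1 else 0) else 1)) else (if q < 38 then (if q < 35 then 0 else (if q < 36 then 0 else 1)) else (if q < 41 then (if q < 39 then 0 else (if q < 40 then 0 else 1)) else (if q < 42 then 0 else 1))))) else (if q < 66 then (if q < 55 then (if q < 49 then (if q < 46 then 0 else (if q < 47 then 0 else 1)) else (if q < 52 then (if q < 50 then 1 else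 0) else (if q < 53 then 1 else 0))) else (if q < 60 then (if q < 57 then 1 else (if q < 58 then 0 else (if q < 59 then 0 else 1))) else (if q < 63 then (if q < 61 then 1 else 0) else (if q < 64 then 1 else (if q < 65 then 0 else 1))))) else (if q < 77 then (if q < 71 then (if q < 68 then (if q < 67 then 1 else 0) else (if q < 69 then 0 else (if q < 70 then 0 else 1))) else (if q < 74 then (if q < 72 then 1 else 0) else (if q < 75 then 1 else (if q < 76 then 1 else 0)))) else (if q < 82 then (if q < 79 then (if q < 78 then 1 else 0) else (if q < 80 then 1 else (if q < 81 then 1 else 0))) else (if q < 85 then (if q < 83 then 0 else (if q < 84 then 0 else 1)) else (if q < 86 then 0 else (if q < 87 then 0 else 1)))))))"

definition HTt :: "nat \<Rightarrow> bool \<Rightarrow> bool \<Rightarrow> nat \<Rightarrow> nat" where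
  "HTt fl c n e = (if c then (if n then (if fl = 0 then (if e < 13 then (if e < 6 then (if e < 3 then (if e < 1 then 27 else (if e < 2 then 28 else 29)) else (if e < 4 then 30 else (if e < 5 then 31 else 32))) else (if e < 9 then (if e < 7 then 33 else (if e < 8 then 34 else 35)) else (if e < 11 then (if e < 10 then 36 else 54) else (if e < 12 then 55 else 56)))) else (if e < 20 then (if e < 16 then (if e < 14 then 57 else (if e < 15 then 41 else 58)) else (if e < 18 then (if e < 17 then 43 else 59) else (if e < 19 then 60 else 61))) else (if e < 23 then (if e < 21 then 62 else (if e < 22 then 63 else 64)) else (if e < 25 then (if e < 24 then 65 else 66) else (if e < 26 then 67 else 68))))) else if fl = 1 then 0 else 0) else (if fl = 0 then (if e < 13 then (if e < 6 then (if e < 3 then (if e < 1 then 27 else (if e < 2 then 28 else 29)) else (if e < 4 then 30 else (if e < 5 then 31 else 32))) else (if e < 9 then (if e < 7 then 33 else (if e < 8 then 34 else 35)) else (if e < 11 then (if e < 10 then 36 else 37) else (if e < 12 then 38 else 39)))) else (if e < 20 then (if e < 16 then (if e < 14 then 40 else (if e < 15 then 41 else 42)) else (if e < 18 then (if e < 17 then 43 else 44) else (if e < 19 then 45 else 46))) else (if e < 23 then (if e < 21 then 47 else (if e < 22 then 48 else 49)) else (if e < 25 then (if e < 24 then 50 else 51) else (if e < 26 then 52 else 53))))) else if fl = 1 then (if e < 13 then (if e < 6 then (if e < 3 then (if e < 1 then 86 else (if e < 2 then 87 else 29)) else (if e < 4 then 30 else (if e < 5 then 31 else 32))) else (if e <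 9 then (if e < 7 then 33 else (if e < 8 then 34 else 35)) else (if e < 11 then (if e < 10 then 36 else 37) else (if e < 12 then 38 else 39)))) else (if e < 20 then (if e < 16 then (if e < 14 then 40 else (if e < 15 then 41 else 42)) else (if e < 18 then (if e < 17 then 43 else 44) else (if e < 19 then 45 else 46))) else (if e < 23 then (if e < 21 then 47 else (if e < 22 then 48 else 49)) else (if e < 25 then (if e < 24 then 50 else 51) else (if e < 26 then 52 else 53))))) else 0)) else (if n then (if fl = 0 then (if e < 13 then (if e < 6 then (if e < 3 then (if e < 1 then 0 else (if e < 2 then 1 else 2)) else (if e < 4 then 3 else (if e < 5 then 4 else 5))) else (if e < 9 then (if e < 7 then 6 else (if e < 8 then 7 else 8)) else (if e < 11 then (if e < 10 then 9 else 10) else (if e < 12 then 11 else 12)))) else (if e < 20 then (if e < 16 then (if e < 14 then 13 else (if e < 15 then 14 else 15)) else (if e < 18 then (if e < 17 then 16 else 17) else (if e < 19 then 18 else 19))) else (if e < 23 then (if e < 21 then 20 else (if e < 22 then 21 else 22)) else (if e < 25 then (if e < 24 then 23 else 24) else (if e < 26 then 25 else 26))))) else if fl = 1 then (if e < 13 then (if e < 6 then (if e < 3 then (if e < 1 then 0 else (if e < 2 then 1 else 2)) else (if e < 4 then 3 else (if e < 5 then 4 else 5))) else (if e < 9 then (if e < 7 then 6 else (if e < 8 then 7 else 8)) else (if e < 11 then (if e < 10 then 9 else 10) else (if e < 12 then 11 else 12)))) else (if e < 20 then (if e < 16 then (if e < 14 then 13 else (if e < 15 then 14 else 15)) else (if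 e < 18 then (if e < 17 then 16 else 17) else (if e < 19 then 18 else 19))) else (if e < 23 then (if e < 21 then 20 else (if e < 22 then 21 else 22)) else (if e < 25 then (if e < 24 then 23 else 24) else (if e < 26 then 25 else 26))))) else (if e < 13 then (if e < 6 then (if e < 3 then (if e < 1 then 0 else (if e < 2 then 1 else 2)) else (if e < 4 then 3 else (if e < 5 then 4 else 5))) else (if e < 9 then (if e < 7 then 6 else (if e < 8 then 7 else 8)) else (if e < 11 then (if e < 10 then 9 else 10) else (if e < 12 then 11 else 12)))) else (if e < 20 then (if e < 16 then (if e < 14 then 13 else (if e < 15 then 14 else 15)) else (if e < 18 then (if e < 17 then 16 else 17) else (if e < 19 then 18 else 19))) else (if e < 23 then (if e < 21 then 20 else (if e < 22 then 21 else 22)) else (if e < 25 then (if e < 24 then 23 else 24) else (if e < 26 then 25 else 26)))))) else (if fl = 0 then 0 else if fl = 1 then (if e < 13 then (if e < 6 then (if e < 3 then (if e < 1 then 0 else (if e < 2 then 1 else 2)) else (if e < 4 then 3 else (if e < 5 then 4 else 5))) else (if e < 9 then (if e < 7 then 6 else (if e < 8 then 69 else 70)) else (if e < 11 then (if e < 10 then 71 else 72) else (if e < 12 then 11 else 73)))) else (if e < 20 then (if e < 16 then (if e < 14 then 13 else (if e < 15 then 74 else 75)) else (if e < 18 then (if e < 17 then 16 else 76) else (if e < 19 then 77 else 78))) else (if e < 23 then (if e < 21 then 79 else (if e < 22 then 80 else 81)) else (if e < 25 then (if e < 24 then 82 else 83) else (if e < 26 then 84 else 85))))) else 0)))"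

type_synonym feature = "nat \<times> nat \<times> bool \<times> bool"

definition feat :: "nat \<Rightarrow> feature" where
  "feat i = (i mod 27, (if i div 27 = 0 then 2 else b2n (tm (i div 27 - 1))), tm (i div 27), tm (Suc (i div 27)))"

definition Gf :: "feature \<Rightarrow> nat \<Rightarrow> feature" where
  "Gf f d = (case f of (e, fl, c, n) \<Rightarrow>
     (if 2*e + d < 27 then (2*e+d, (if fl = 2 then 2 else 1 - fl), c, \<not> c)
      else (2*e+d-27, b2n c, \<not> c, n)))"

definition Hs :: "feature \<Rightarrow> nat" where
  "Hs f = (case f of (e, fl, c, n) \<Rightarrow> HTt fl c n e)"

definition validF :: "feature \<Rightarrow> bool" where
  "validF f = (case f of (e, fl, c, n) \<Rightarrow> e < 27 \<and>
      (if fl = 2 then \<not> c \<and> n else fl < 2 \<and> \<not> (c = n \<and> (fl = 1) = c)))"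

definition dlt :: "nat \<Rightarrow> nat \<Rightarrow> nat" where
  "dlt q d = (if d = 0 then D0t q else D1t q)"

definition outf :: "nat \<Rightarrow> nat" where "outf q = OLt q"

lemma nte: "\<not> (tm k = tm (Suc k) \<and> tm (Suc k) = tm (Suc (Suc k)))"
proof -
  obtain m where "k = 2*m \<or> k = Suc (2*m)" by (metis oddE evenE Suc_eq_plus1)
  then show ?thesis
  proof
    assume "k = 2*m" then show ?thesis by simp
  next
    assume k: "k = Suc (2*m)"
    have "Suc k = 2 * Suc m" "Suc (Suc k) = Suc (2 * Suc m)" using k by simp_all
    then show ?thesis by simp
  qed
qed

lemma valid_feat: "validF (feat i)"
proof -
  define k where "k = i div 27"
  show ?thesis
  proof (cases "k = 0")
    case True then show ?thesis by (simp add: feat_def validF_def k_def[symmetric])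
  next
    case False
    then obtain k' where k': "k = Suc k'" by (cases k) auto
    show ?thesis using False nte[of k'] unfolding feat_def validF_def k_def[symmetric] k'
      by (auto simp add: b2n_def)
  qed
qed

definition chkF :: "feature \<Rightarrow> bool" where
  "chkF f = (Hs (Gf f 0) = dlt (Hs f) 0 \<and> Hs (Gf f 1) = dlt (Hs f) 1 \<and>
     outf (Hs f) = (case f of (e, fl, c, n) \<Rightarrow> FFv e (fl = 1) c n))"

lemma chk_0: "list_all (\<lambda>e. chkF (e, 2, False, True)) [0,1,2,3,4,5,6,7,8,9,10,11,12,13,14,15,16,17,18,19,20,21,22,23,24,25,26]"
  by (simp add: chkF_def Gf_def Hs_def HTt_def dlt_def D0t_def D1t_def outf_def OLt_def b2n_def FFv_tab)

lemma chk_1: "list_all (\<lambda>e. chkF (e, 0, False, True)) [0,1,2,3,4,5,6,7,8,9,10,11,12,13,14,15,16,17,18,19,20,21,22,23,24,25,26]"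
  by (simp add: chkF_def Gf_def Hs_def HTt_def dlt_def D0t_def D1t_def outf_def OLt_def b2n_def FFv_tab)

lemma chk_2: "list_all (\<lambda>e. chkF (e, 0, True, False)) [0,1,2,3,4,5,6,7,8,9,10,11,12,13,14,15,16,17,18,19,20,21,22,23,24,25,26]"
  by (simp add: chkF_def Gf_def Hs_def HTt_def dlt_def D0t_def D1t_def outf_def OLt_def b2n_def FFv_tab)

lemma chk_3: "list_all (\<lambda>e. chkF (e, 0, True, True)) [0,1,2,3,4,5,6,7,8,9,10,11,12,13,14,15,16,17,18,19,20,21,22,23,24,25,26]"
  by (simp add: chkF_def Gf_def Hs_def HTt_def dlt_def D0t_def D1t_def outf_def OLt_def b2n_def FFv_tab)

lemma chk_4: "list_all (\<lambda>e. chkF (e, 1, False, False)) [0,1,2,3,4,5,6,7,8,9,10,11,12,13,14,15,16,17,18,19,20,21,22,23,24,25,26]"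
  by (simp add: chkF_def Gf_def Hs_def HTt_def dlt_def D0t_def D1t_def outf_def OLt_def b2n_def FFv_tab)

lemma chk_5: "list_all (\<lambda>e. chkF (e, 1, False, True)) [0,1,2,3,4,5,6,7,8,9,10,11,12,13,14,15,16,17,18,19,20,21,22,23,24,25,26]"
  by (simp add: chkF_def Gf_def Hs_def HTt_def dlt_def D0t_def D1t_def outf_def OLt_def b2n_def FFv_tab)

lemma chk_6: "list_all (\<lambda>e. chkF (e, 1, True, False)) [0,1,2,3,4,5,6,7,8,9,10,11,12,13,14,15,16,17,18,19,20,21,22,23,24,25,26]"
  by (simp add: chkF_def Gf_def Hs_def HTt_def dlt_def D0t_def D1t_def outf_def OLt_def b2n_def FFv_tab)

lemma chk_valid: "validF f \<Longrightarrow> chkF f"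
proof -
  assume v: "validF f"
  obtain e fl c n where f: "f = (e, fl, c, n)" by (cases f) auto
  have e: "e < 27" using v f by (simp add: validF_def)
  have "fl = 2 \<and> c = False \<and> n = True \<or> (fl = 0 \<or> fl = 1) \<and> \<not> (c = n \<and> (fl = 1) = c)"
    using v f by (auto simp add: validF_def split: if_splits)
  then have "(fl, c, n) \<in> {(2, False, True), (0, False, True), (0, True, False), (0, True, True), (1, False, False), (1, False, True), (1, True, False)}" by (cases c; cases n) auto
  then show ?thesis using e chk_0 chk_1 chk_2 chk_3 chk_4 chk_5 chk_6 unfolding f all27[symmetric] by auto
qed

lemma dm27: "r < 27 \<Longrightarrow> (27*q + r) div 27 = (q::nat)" "r < 27 \<Longrightarrow> (27*q + r) mod 27 = (r::nat)"
  by simp_all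

lemma feat_step: "d < 2 \<Longrightarrow> feat (2*m + d) = Gf (feat m) d"
proof -
  assume d: "d < 2"
  define k where "k = m div 27"
  define e where "e = m mod 27"
  have m: "m = 27*k + e" unfolding k_def e_def by simp
  have e27: "e < 27" unfolding e_def by simp
  show ?thesis
  proof (cases "2*e + d < 27")
    case True
    have mm: "2*m+d = 27*(2*k) + (2*e+d)" using m by simp
    have q: "(2*m+d) div 27 = 2*k" "(2*m+d) mod 27 = 2*e+d" unfolding mm using dm27 True by blast+
    show ?thesis
    proof (cases "k = 0")
      case True then show ?thesis using q `2*e+d<27` unfolding feat_def Gf_def k_def[symmetric] e_def[symmetric] by simp
    next
      case False
      then obtain k' where k': "k = Suc k'" by (cases k) auto
      have "2*k - 1 = Suc (2*k')" using k' by simp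
      then show ?thesis using q `2*e+d<27` k' unfolding feat_def Gf_def k_def[symmetric] e_def[symmetric]
        by (simp add: b2n_def)
    qed
  next
    case False
    have mm: "2*m+d = 27*(Suc (2*k)) + (2*e+d-27)" using m False by simp
    have r: "2*e+d-27 < 27" using d e27 by simp
    have q: "(2*m+d) div 27 = Suc (2*k)" "(2*m+d) mod 27 = 2*e+d-27" unfolding mm using dm27 r by blast+
    show ?thesis using q False unfolding feat_def Gf_def k_def[symmetric] e_def[symmetric]
      by (simp add: b2n_def)
  qed
qed

lemma bin_msd_step: "0 < n \<Longrightarrow> bin_msd n = bin_msd (n div 2) @ [n mod 2]"
  unfolding bin_msd_def by (subst bin_lsd.simps) simp

lemma bin_msd0: "bin_msd 0 = []"
  unfolding bin_msd_def by (subst bin_lsd.simps) simp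

lemma feat0: "feat 0 = (0, 2, False, True)" by (simp add: feat_def)

lemma run_feat: "foldl dlt 0 (bin_msd n) = Hs (feat n)"
proof (induction n rule: less_induct)
  case (less n)
  show ?case
  proof (cases "n = 0")
    case True then show ?thesis by (simp add: bin_msd0 feat0 Hs_def HTt_def dlt_def)
  next
    case False
    have IH: "foldl dlt 0 (bin_msd (n div 2)) = Hs (feat (n div 2))" using less False by simp
    have n: "n = 2 * (n div 2) + n mod 2" by simp
    have c: "chkF (feat (n div 2))" by (rule chk_valid[OF valid_feat])
    have "foldl dlt 0 (bin_msd n) = dlt (Hs (feat (n div 2))) (n mod 2)"
      using IH bin_msd_step[of n] False by simp
    also have "\<dots> = Hs (Gf (feat (n div 2)) (n mod 2))"
      using c by (cases "n mod 2 = 0") (auto simp add: chkF_def mod2_eq_if split: if_splits)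
    also have "\<dots> = Hs (feat n)" using feat_step[of "n mod 2" "n div 2"] n by simp
    finally show ?thesis .
  qed
qed

lemma out_feat: "outf (Hs (feat n)) = aw n"
proof -
  have c: "chkF (feat n)" by (rule chk_valid[OF valid_feat])
  define k where "k = n div 27"
  have n: "n = 27 * k + n mod 27" unfolding k_def by simp
  have "aw n = FF (n mod 27) (tm (k - 1)) (tm k) (tm (Suc k))"
    using KL[of "n mod 27" k] n by simp
  moreover have "outf (Hs (feat n)) = FF (n mod 27) (tm (k - 1)) (tm k) (tm (Suc k))"
    using c FF_FFv[of "n mod 27"] unfolding chkF_def feat_def k_def[symmetric] by (cases "k = 0") (auto simp add: b2n_def)
  ultimately show ?thesis by simp
qed

lemma D0t_lt: "D0t q < 88" unfolding D0t_def by (simp split: if_split)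
lemma D1t_lt: "D1t q < 88" unfolding D1t_def by (simp split: if_split)

lemma automatic: "two_automatic_with_states 88 aw"
  unfolding two_automatic_with_states_def dfao2_generates_def
proof (intro exI conjI allI impI)
  show "(0::nat) < 88" by simp
next
  fix q d :: nat assume "q < 88" "d < 2"
  show "dlt q d < 88" unfolding dlt_def using D0t_lt D1t_lt by simp
next
  fix n show "outf (foldl dlt 0 (bin_msd n)) = aw n" using run_feat out_feat by simp
qed

lemma tm_e: "n = 2*m \<Longrightarrow> tm n = tm m" by simp
lemma tm_o: "n = 2*m+1 \<Longrightarrow> tm n = (\<not> tm m)" by simp

lemma hh: "tm a = tm b \<Longrightarrow> a = x \<Longrightarrow> b = y \<Longrightarrow> tm x = tm y" by simp

lemma no3: "\<not> (tm k = tm (k+1) \<and> tm (k+1) = tm (k+2))"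
proof -
  obtain m where "k = 2*m \<or> k = 2*m+1" by (metis oddE evenE)
  then show ?thesis
  proof
    assume k: "k = 2*m"
    show ?thesis using tm_e[of k m] tm_o[of "k+1" m] k by simp
  next
    assume k: "k = 2*m+1"
    show ?thesis using tm_e[of "k+1" "m+1"] tm_o[of "k+2" "m+1"] k by simp
  qed
qed

lemma overlap_free: "1 \<le> Q \<Longrightarrow> \<not> (\<forall>j\<le>Q. tm (i+j) = tm (i+j+Q))"
proof (induction Q arbitrary: i rule: less_induct)
  case (less Q)
  show ?case
  proof
    assume H: "\<forall>j\<le>Q. tm (i+j) = tm (i+j+Q)"
    show False
    proof (cases "even Q")
      case True
      then obtain Q' where Q: "Q = 2*Q'" by blast
      have Q1: "1 \<le> Q'" "Q' < Q" using Q less.prems by auto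
      define i' where "i' = i div 2"
      define d where "d = i mod 2"
      have i: "i = 2*i' + d" "d < 2" unfolding i'_def d_def by simp_all
      have "\<forall>j\<le>Q'. tm (i'+j) = tm (i'+j+Q')"
      proof (intro allI impI)
        fix j assume j: "j \<le> Q'"
        have h: "tm (i + 2*j) = tm (i + 2*j + Q)" using H j Q by simp
        show "tm (i'+j) = tm (i'+j+Q')"
        proof (cases "d = 0")
          case True
          then show ?thesis using h tm_e[of "i+2*j" "i'+j"] tm_e[of "i+2*j+Q" "i'+j+Q'"] i Q by simp
        next
          case False
          then have "d = 1" using i by simp
          then show ?thesis using h tm_o[of "i+2*j" "i'+j"] tm_o[of "i+2*j+Q" "i'+j+Q'"] i Q by simp
        qed
      qed
      then show False using less.IH[OF Q1(2) Q1(1)] by blast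
    next
      case False
      then obtain R where Q: "Q = 2*R+1" by (metis oddE)
      show False
      proof (cases "R = 0")
        case True
        then show False using H[rule_format, of 0] H[rule_format, of 1] no3[of i] Q by simp
      next
        case False
        define m where "m = (i+1) div 2"
        have m: "i \<le> 2*m" "2*m \<le> i+1" unfolding m_def by linarith+
        show False
        proof (cases "2*m+3 \<le> i+Q")
          case True
          define u where "u = m + R"
          have h0: "tm (2*m) = tm (2*m+Q)" using H[rule_format, of "2*m-i"] m True by simp
          have h1: "tm (2*m+1) = tm (2*m+1+Q)" using H[rule_format, of "2*m+1-i"] m True by simp
          have h2: "tm (2*m+2) = tm (2*m+2+Q)" using H[rule_format, of "2*m+2-i"] m True by simp
          have h3: "tm (2*m+3) = tm (2*m+3+Q)" using H[rule_format, of "2*m+3-i"] m True by simp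
          have a0: "tm m = (\<not> tm u)" using h0 tm_e[of "2*m" m] tm_o[of "2*m+Q" u] Q u_def by simp
          have a1: "(\<not> tm m) = tm (u+1)" using h1 tm_o[of "2*m+1" m] tm_e[of "2*m+1+Q" "u+1"] Q u_def by simp
          have a2: "tm (m+1) = (\<not> tm (u+1))" using h2 tm_e[of "2*m+2" "m+1"] tm_o[of "2*m+2+Q" "u+1"] Q u_def by simp
          have a3: "(\<not> tm (m+1)) = tm (u+2)" using h3 tm_o[of "2*m+3" "m+1"] tm_e[of "2*m+3+Q" "u+2"] Q u_def by simp
          show False using a0 a1 a2 a3 no3[of u] by simp
        next
          case False
          have R1: "2*m = i+1" "R = 1" using m Q `R \<noteq> 0` False by linarith+
          define c where "c = m - 1"
          have c: "i = 2*c+1" using R1 unfolding c_def by linarith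
          have h1: "tm (2*c+2) = tm (2*c+5)" by (rule hh[OF H[rule_format, of 1]]) (use c R1 Q in simp)+
          have h2: "tm (2*c+3) = tm (2*c+6)" by (rule hh[OF H[rule_format, of 2]]) (use c R1 Q in simp)+
          have h3: "tm (2*c+4) = tm (2*c+7)" by (rule hh[OF H[rule_format, of 3]]) (use c R1 Q in simp)+
          have a1: "tm (c+1) = (\<not> tm (c+2))" using h1 tm_e[of "2*c+2" "c+1"] tm_o[of "2*c+5" "c+2"] by simp
          have a2: "(\<not> tm (c+1)) = tm (c+3)" using h2 tm_o[of "2*c+3" "c+1"] tm_e[of "2*c+6" "c+3"] by simp
          have a3: "tm (c+2) = (\<not> tm (c+3))" using h3 tm_e[of "2*c+4" "c+2"] tm_o[of "2*c+7" "c+3"] by simp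
          show False using a1 a2 a3 by simp
        qed
      qed
    qed
  qed
qed


definition win :: "nat \<Rightarrow> nat \<Rightarrow> bool list" where "win k n = map (\<lambda>j. tm (k + j - 1)) [0..<n]"

definition vl :: "nat \<Rightarrow> bool list \<Rightarrow> nat" where
  "vl e ws = FFv e (hd ws) (hd (tl ws)) (hd (tl (tl ws)))"

definition V :: "bool list \<Rightarrow> nat \<Rightarrow> nat" where "V ws i = vl (i mod 27) (drop (i div 27) ws)"

lemma vl_nth: "q + 3 \<le> length ws \<Longrightarrow> vl e (drop q ws) = FFv e (ws ! q) (ws ! (q+1)) (ws ! (q+2))"
  unfolding vl_def by (simp add: hd_drop_conv_nth tl_drop drop_Suc[symmetric])

lemma AW_V: "i div 27 + 3 \<le> n \<Longrightarrow> aw (27*k + i) = V (win k n) i"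
proof -
  assume n: "i div 27 + 3 \<le> n"
  define q where "q = i div 27"
  define e where "e = i mod 27"
  have i: "27*k + i = 27*(k+q) + e" unfolding q_def e_def by simp
  have e: "e < 27" unfolding e_def by simp
  have "aw (27*k + i) = FF e (tm (k+q-1)) (tm (k+q)) (tm (Suc (k+q)))" by (simp only: i KL[OF e])
  also have "\<dots> = FFv e (tm (k+q-1)) (tm (k+q)) (tm (Suc (k+q)))" using FF_FFv[OF e] by simp
  also have "\<dots> = V (win k n) i" unfolding V_def q_def[symmetric] e_def[symmetric]
    using n vl_nth[of q "win k n" e] unfolding q_def[symmetric] by (simp add: win_def)
  finally show ?thesis .
qed

definition nx :: "nat \<Rightarrow> nat" where "nx e = (if e = 26 then 0 else e + 1)"
definition nw :: "nat \<Rightarrow> bool list \<Rightarrow> bool list" where "nw e w = (if e = 26 then tl w else w)"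

lemma nx_sem: "nx (i mod 27) = Suc i mod 27"
  unfolding nx_def by (simp add: mod_Suc)

lemma nw_sem: "nw (i mod 27) (drop (i div 27) ws) = drop (Suc i div 27) ws"
proof (cases "i mod 27 = 26")
  case True
  then have "Suc i div 27 = Suc (i div 27)" by (simp add: div_Suc mod_Suc)
  then show ?thesis using True by (simp add: nw_def drop_Suc tl_drop)
next
  case False
  then have "Suc i div 27 = i div 27" by (simp add: div_Suc mod_Suc)
  then show ?thesis using False by (simp add: nw_def)
qed

function pm :: "nat \<Rightarrow> bool list \<Rightarrow> nat \<Rightarrow> bool list \<Rightarrow> nat \<Rightarrow> nat \<Rightarrow> bool" where
  "pm e1 w1 e2 w2 j p = (if p \<le> j then True else
     if vl e1 w1 = vl e2 w2 then pm (nx e1) (nw e1 w1) (nx e2) (nw e2 w2) (j + 1) p else False)"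
  by pat_completeness auto
termination by (relation "measure (\<lambda>(e1, w1, e2, w2, j, p). p - j)") auto
declare pm.simps[simp del]

lemma pm_sem: "p - j = n \<Longrightarrow> (\<forall>t<n. V ws (i1+t) = V ws (i2+t)) \<Longrightarrow>
    pm (i1 mod 27) (drop (i1 div 27) ws) (i2 mod 27) (drop (i2 div 27) ws) j p"
proof (induction n arbitrary: i1 i2 j)
  case 0 then show ?case by (subst pm.simps) simp
next
  case (Suc n)
  have h0: "vl (i1 mod 27) (drop (i1 div 27) ws) = vl (i2 mod 27) (drop (i2 div 27) ws)"
    using Suc.prems(2)[rule_format, of 0] by (simp add: V_def)
  have "\<forall>t<n. V ws (Suc i1 + t) = V ws (Suc i2 + t)" using Suc.prems(2) by auto
  then have "pm (Suc i1 mod 27) (drop (Suc i1 div 27) ws) (Suc i2 mod 27) (drop (Suc i2 div 27) ws) (j+1) p"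
    using Suc.IH[of "j+1" "Suc i1" "Suc i2"] Suc.prems(1) by simp
  then show ?case using h0 Suc.prems(1) by (subst pm.simps) (simp add: nx_sem nw_sem)
qed

function allq :: "nat \<Rightarrow> bool list \<Rightarrow> nat \<Rightarrow> bool list \<Rightarrow> nat \<Rightarrow> bool" where
  "allq e1 w1 e2 w2 p = (if 36 \<le> p then True else
     (if pm e1 w1 e2 w2 0 p then (p = 2 \<and> vl e1 w1 = 0 \<and> vl (nx e1) (nw e1 w1) = 1) else True) \<and>
     allq e1 w1 (nx e2) (nw e2 w2) (p + 1))"
  by pat_completeness auto
termination by (relation "measure (\<lambda>(e1, w1, e2, w2, p). 36 - p)") auto
declare allq.simps[simp del]

lemma allq_rec: "p < 36 \<Longrightarrow> allq (i mod 27) (drop (i div 27) ws) ((i+p) mod 27) (drop ((i+p) div 27) ws) p =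
    ((if pm (i mod 27) (drop (i div 27) ws) ((i+p) mod 27) (drop ((i+p) div 27) ws) 0 p
      then (p = 2 \<and> V ws i = 0 \<and> V ws (Suc i) = 1) else True) \<and>
     allq (i mod 27) (drop (i div 27) ws) ((i + Suc p) mod 27) (drop ((i + Suc p) div 27) ws) (Suc p))"
  apply (subst allq.simps[of "i mod 27" "drop (i div 27) ws" "(i+p) mod 27" "drop ((i+p) div 27) ws" p])
  apply (simp add: nx_sem nw_sem V_def)
  done

lemma allq_sem: "allq (i mod 27) (drop (i div 27) ws) ((i+p) mod 27) (drop ((i+p) div 27) ws) p \<Longrightarrow>
   p \<le> p' \<Longrightarrow> p' \<le> 35 \<Longrightarrow>
   pm (i mod 27) (drop (i div 27) ws) ((i+p') mod 27) (drop ((i+p') div 27) ws) 0 p' \<Longrightarrow>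
   p' = 2 \<and> V ws i = 0 \<and> V ws (Suc i) = 1"
proof (induction "36 - p" arbitrary: p)
  case 0 then show ?case by simp
next
  case (Suc m)
  have p36: "p < 36" using Suc.hyps by simp
  note rec = allq_rec[OF p36, of i ws]
  show ?case
  proof (cases "p' = p")
    case True
    then show ?thesis using rec Suc.prems by simp
  next
    case False
    then have "Suc p \<le> p'" using Suc.prems by simp
    moreover have "allq (i mod 27) (drop (i div 27) ws) ((i + Suc p) mod 27) (drop ((i + Suc p) div 27) ws) (Suc p)"
      using rec Suc.prems by simp
    moreover have "m = 36 - Suc p" using Suc.hyps by simp
    ultimately show ?thesis using Suc.hyps(1)[of "Suc p"] Suc.prems by simp
  qed
qed

function alls :: "bool list \<Rightarrow> nat \<Rightarrow> bool" where
  "alls ws s = (if 27 \<le> s then True else allq s ws (nx (nx s)) (nw (nx s) (nw s ws)) 2 \<and> alls ws (s + 1))"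
  by pat_completeness auto
termination by (relation "measure (\<lambda>(ws, s). 27 - s)") auto
declare alls.simps[simp del]

lemma alls_sem: "alls ws s0 \<Longrightarrow> s0 \<le> s \<Longrightarrow> s < 27 \<Longrightarrow>
   allq (s mod 27) (drop (s div 27) ws) ((s+2) mod 27) (drop ((s+2) div 27) ws) 2"
proof (induction "27 - s0" arbitrary: s0)
  case 0 then show ?case by simp
next
  case (Suc m)
  have s0: "s0 < 27" using Suc.hyps by simp
  have c2: "nx (nx s0) = (s0+2) mod 27" "nw (nx s0) (nw s0 ws) = drop ((s0+2) div 27) ws"
    using nx_sem[of s0] nw_sem[of s0 ws] nx_sem[of "Suc s0"] nw_sem[of "Suc s0" ws] s0 by simp_all
  have rec: "alls ws s0 = (allq s0 ws ((s0+2) mod 27) (drop ((s0+2) div 27) ws) 2 \<and> alls ws (Suc s0))"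
    using s0 c2 by (subst alls.simps[of ws s0]) simp
  show ?case
  proof (cases "s = s0")
    case True then show ?thesis using rec Suc.prems s0 by simp
  next
    case False
    then show ?thesis using rec Suc.prems Suc.hyps(1)[of "Suc s0"] Suc.hyps(2) by simp
  qed
qed

definition ov6 :: "bool \<Rightarrow> bool \<Rightarrow> bool \<Rightarrow> bool \<Rightarrow> bool \<Rightarrow> bool \<Rightarrow> bool" where
  "ov6 b0 b1 b2 b3 b4 b5 = (nt3 b0 b1 b2 \<and> nt3 b1 b2 b3 \<and> nt3 b2 b3 b4 \<and> nt3 b3 b4 b5 \<and>
     \<not> (b0 = b2 \<and> b1 = b3 \<and> b2 = b4) \<and> \<not> (b1 = b3 \<and> b2 = b4 \<and> b3 = b5))"

definition chk6 :: "bool \<Rightarrow> bool \<Rightarrow> bool \<Rightarrow> bool \<Rightarrow> bool \<Rightarrow> bool \<Rightarrow> bool" where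
  "chk6 b0 b1 b2 b3 b4 b5 = (ov6 b0 b1 b2 b3 b4 b5 \<longrightarrow> alls [b0, b1, b2, b3, b4, b5] 0)"

lemma chk6_all: "chk6 b0 b1 b2 b3 b4 b5"
  unfolding chk6_def
  by (cases b0; cases b1; cases b2; cases b3; cases b4; cases b5; simp only: ov6_def nt3_def simp_thms;
      (simp only: alls.simps allq.simps pm.simps vl_def nx_def nw_def FFv_tab list.sel if_True if_False rel_simps arith_simps numeral_plus_one one_add_one add_0_left simp_thms cong: if_weak_cong)?)


lemma upt6: "[0..<6] = [0,1,2,3,4,5::nat]" by (simp add: upt_rec)
lemma upt7: "[0..<7] = [0,1,2,3,4,5,6::nat]" by (simp add: upt_rec)
lemma upt4: "[0..<4] = [0,1,2,3::nat]" by (simp add: upt_rec)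

lemma tm_small: "tm 2 = True" "tm 3 = False" "tm 4 = True" "tm 5 = False"
proof -
  show "tm 2 = True" using tm_even[of 1] by simp
  show "tm 3 = False" using tm_odd2[of 1] by simp
  show "tm 4 = True" using tm_even[of 2] tm_even[of 1] by simp
  show "tm 5 = False" using tm_odd2[of 2] tm_even[of 1] by simp
qed

lemma ov2: "\<not> (tm i = tm (i+2) \<and> tm (i+1) = tm (i+3) \<and> tm (i+2) = tm (i+4))"
proof
  assume a: "tm i = tm (i+2) \<and> tm (i+1) = tm (i+3) \<and> tm (i+2) = tm (i+4)"
  have "\<forall>j\<le>2. tm (i+j) = tm (i+j+2)"
  proof (intro allI impI)
    fix j :: nat assume "j \<le> 2"
    then have "j = 0 \<or> j = 1 \<or> j = 2" by auto
    then show "tm (i+j) = tm (i+j+2)" using a by (auto simp add: eval_nat_numeral)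
  qed
  then show False using overlap_free[of 2 i] by simp
qed

lemma no3': "nt3 (tm i) (tm (i+1)) (tm (i+2))" using no3[of i] by (simp add: nt3_def)

lemma win6: "win k 6 = [tm (k-1), tm k, tm (k+1), tm (k+2), tm (k+3), tm (k+4)]"
  by (simp add: win_def upt6 add.commute)
lemma win7: "win k 7 = [tm (k-1), tm k, tm (k+1), tm (k+2), tm (k+3), tm (k+4), tm (k+5)]"
  by (simp add: win_def upt7 add.commute)
lemma win4: "win k 4 = [tm (k-1), tm k, tm (k+1), tm (k+2)]"
  by (simp add: win_def upt4 add.commute)

lemma ov6_win: "ov6 (tm (k-1)) (tm k) (tm (k+1)) (tm (k+2)) (tm (k+3)) (tm (k+4))"
proof (cases k)
  case 0 then show ?thesis by (simp add: ov6_def nt3_def tm_small)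
next
  case (Suc k')
  have "k - 1 = k'" "k = k'+1" "k+1 = k'+2" "k+2 = k'+3" "k+3 = k'+4" "k+4 = k'+5" using Suc by simp_all
  then show ?thesis unfolding ov6_def
    using no3'[of k'] no3'[of "k'+1"] no3'[of "k'+2"] no3'[of "k'+3"] ov2[of k'] ov2[of "k'+1"]
    by (simp add: eval_nat_numeral)
qed

lemma small_sq:
  assumes p: "2 \<le> p" "p \<le> 35" and H: "\<forall>j<p. aw (s+j) = aw (s+p+j)"
  shows "p = 2 \<and> aw s = 0 \<and> aw (Suc s) = 1"
proof -
  define k where "k = s div 27"
  define e0 where "e0 = s mod 27"
  define ws where "ws = win k 6"
  have s: "s = 27*k + e0" unfolding k_def e0_def by simp
  have e0: "e0 < 27" unfolding e0_def by simp
  have AW: "\<And>i. i < 108 \<Longrightarrow> aw (27*k + i) = V ws i" unfolding ws_def by (rule AW_V) simp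
  have sq: "\<forall>j<p. V ws (e0+j) = V ws ((e0+p)+j)"
  proof (intro allI impI)
    fix j assume j: "j < p"
    have "aw (27*k + (e0+j)) = aw (27*k + (e0+p+j))" using H j s by (simp add: add.assoc)
    then show "V ws (e0+j) = V ws ((e0+p)+j)" using AW[of "e0+j"] AW[of "e0+p+j"] j p e0 by simp
  qed
  have pm1: "pm (e0 mod 27) (drop (e0 div 27) ws) ((e0+p) mod 27) (drop ((e0+p) div 27) ws) 0 p"
    by (rule pm_sem[OF _ sq]) simp
  have "chk6 (tm (k-1)) (tm k) (tm (k+1)) (tm (k+2)) (tm (k+3)) (tm (k+4))" by (rule chk6_all)
  then have "alls ws 0" using ov6_win[of k] unfolding chk6_def ws_def win6 by simp
  then have "allq (e0 mod 27) (drop (e0 div 27) ws) ((e0+2) mod 27) (drop ((e0+2) div 27) ws) 2"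
    using alls_sem e0 by blast
  then have r: "p = 2 \<and> V ws e0 = 0 \<and> V ws (Suc e0) = 1" using allq_sem[OF _ p(1) p(2) pm1] by blast
  have "aw s = V ws e0" using AW[of e0] s e0 by simp
  moreover have "aw (Suc s) = V ws (Suc e0)" using AW[of "Suc e0"] s e0 by simp
  ultimately show ?thesis using r by simp
qed

definition nt7 :: "bool \<Rightarrow> bool \<Rightarrow> bool \<Rightarrow> bool \<Rightarrow> bool \<Rightarrow> bool \<Rightarrow> bool \<Rightarrow> bool" where
  "nt7 b0 b1 b2 b3 b4 b5 b6 = (nt3 b0 b1 b2 \<and> nt3 b1 b2 b3 \<and> nt3 b2 b3 b4 \<and> nt3 b3 b4 b5 \<and> nt3 b4 b5 b6)"

function a51 :: "bool list \<Rightarrow> nat \<Rightarrow> nat \<Rightarrow> bool list \<Rightarrow> bool" where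
  "a51 ws s e2 w2 = (if 27 \<le> s then True else \<not> pm s ws e2 w2 0 51 \<and> a51 ws (s + 1) (nx e2) (nw e2 w2))"
  by pat_completeness auto
termination by (relation "measure (\<lambda>(ws, s, e2, w2). 27 - s)") auto
declare a51.simps[simp del]

lemma a51_sem: "a51 ws s0 ((s0+51) mod 27) (drop ((s0+51) div 27) ws) \<Longrightarrow> s0 \<le> s \<Longrightarrow> s < 27 \<Longrightarrow>
   \<not> pm s ws ((s+51) mod 27) (drop ((s+51) div 27) ws) 0 51"
proof (induction "27 - s0" arbitrary: s0)
  case 0 then show ?case by simp
next
  case (Suc m)
  have s0: "s0 < 27" using Suc.hyps by simp
  have rec: "a51 ws s0 ((s0+51) mod 27) (drop ((s0+51) div 27) ws) =
     (\<not> pm s0 ws ((s0+51) mod 27) (drop ((s0+51) div 27) ws) 0 51 \<and>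
      a51 ws (Suc s0) ((Suc s0+51) mod 27) (drop ((Suc s0+51) div 27) ws))"
    using s0 by (subst a51.simps[of ws s0]) (simp add: nx_sem nw_sem)
  show ?case
  proof (cases "s = s0")
    case True then show ?thesis using rec Suc.prems by simp
  next
    case False
    then show ?thesis using rec Suc.prems Suc.hyps(1)[of "Suc s0"] Suc.hyps(2) by simp
  qed
qed

definition chk7 :: "bool \<Rightarrow> bool \<Rightarrow> bool \<Rightarrow> bool \<Rightarrow> bool \<Rightarrow> bool \<Rightarrow> bool \<Rightarrow> bool" where
  "chk7 b0 b1 b2 b3 b4 b5 b6 = (nt7 b0 b1 b2 b3 b4 b5 b6 \<longrightarrow> a51 [b0, b1, b2, b3, b4, b5, b6] 0 24 [b1, b2, b3, b4, b5, b6])"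

lemma chk7_all: "chk7 b0 b1 b2 b3 b4 b5 b6"
  unfolding chk7_def
  by (cases b0; cases b1; cases b2; cases b3; cases b4; cases b5; cases b6; simp only: nt7_def nt3_def simp_thms;
      (simp only: alls.simps allq.simps pm.simps vl_def nx_def nw_def FFv_tab list.sel if_True if_False rel_simps arith_simps numeral_plus_one one_add_one add_0_left simp_thms a51.simps cong: if_weak_cong)?)

lemma nt7_win: "nt7 (tm (k-1)) (tm k) (tm (k+1)) (tm (k+2)) (tm (k+3)) (tm (k+4)) (tm (k+5))"
proof (cases k)
  case 0 then show ?thesis by (simp add: nt7_def nt3_def tm_small)
next
  case (Suc k')
  have "k - 1 = k'" "k = k'+1" "k+1 = k'+2" "k+2 = k'+3" "k+3 = k'+4" "k+4 = k'+5" "k+5 = k'+6" using Suc by simp_all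
  then show ?thesis unfolding nt7_def
    using no3'[of k'] no3'[of "k'+1"] no3'[of "k'+2"] no3'[of "k'+3"] no3'[of "k'+4"]
    by (simp add: eval_nat_numeral)
qed

lemma sq51: assumes H: "\<forall>j<51. aw (s+j) = aw (s+51+j)" shows False
proof -
  define k where "k = s div 27"
  define e0 where "e0 = s mod 27"
  define ws where "ws = win k 7"
  have s: "s = 27*k + e0" unfolding k_def e0_def by simp
  have e0: "e0 < 27" unfolding e0_def by simp
  have AW: "\<And>i. i < 135 \<Longrightarrow> aw (27*k + i) = V ws i" unfolding ws_def by (rule AW_V) simp
  have sq: "\<forall>j<51. V ws (e0+j) = V ws ((e0+51)+j)"
  proof (intro allI impI)
    fix j :: nat assume j: "j < 51"
    have "aw (27*k + (e0+j)) = aw (27*k + (e0+51+j))" using H j s by (simp add: add.assoc)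
    then show "V ws (e0+j) = V ws ((e0+51)+j)" using AW[of "e0+j"] AW[of "e0+51+j"] j e0 by simp
  qed
  have pm1: "pm (e0 mod 27) (drop (e0 div 27) ws) ((e0+51) mod 27) (drop ((e0+51) div 27) ws) 0 51"
    by (rule pm_sem[OF _ sq]) simp
  have "chk7 (tm (k-1)) (tm k) (tm (k+1)) (tm (k+2)) (tm (k+3)) (tm (k+4)) (tm (k+5))" by (rule chk7_all)
  then have "a51 ws 0 24 (tl ws)"
    using nt7_win[of k] unfolding chk7_def ws_def win7 by simp
  then have "a51 ws 0 ((0+51) mod 27) (drop ((0+51) div 27) ws)" by (simp add: drop_Suc)
  then have "\<not> pm e0 ws ((e0+51) mod 27) (drop ((e0+51) div 27) ws) 0 51" using a51_sem e0 by blast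
  then show False using pm1 e0 by simp
qed

fun pmk :: "nat \<Rightarrow> bool list \<Rightarrow> nat list \<Rightarrow> bool" where
  "pmk e w [] = True"
| "pmk e w (x # xs) = (if vl e w = x then pmk (nx e) (nw e w) xs else False)"

lemma pmk_sem: "(\<forall>j<length xs. V ws (i+j) = xs ! j) \<Longrightarrow> pmk (i mod 27) (drop (i div 27) ws) xs"
proof (induction xs arbitrary: i)
  case Nil then show ?case by simp
next
  case (Cons x xs)
  have h0: "vl (i mod 27) (drop (i div 27) ws) = x" using Cons.prems[rule_format, of 0] by (simp add: V_def)
  have "\<forall>j<length xs. V ws (Suc i + j) = xs ! j" using Cons.prems by auto
  then have "pmk (Suc i mod 27) (drop (Suc i div 27) ws) xs" by (rule Cons.IH)
  then show ?case using h0 by (simp add: nx_sem nw_sem)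
qed

function mk :: "bool \<Rightarrow> bool list \<Rightarrow> nat \<Rightarrow> bool" where
  "mk b ws s = (if 27 \<le> s then True else (\<not> pmk s ws [1,1,1,0,0,0] \<or> s = (if b then 3 else 0)) \<and> mk b ws (s + 1))"
  by pat_completeness auto
termination by (relation "measure (\<lambda>(b, ws, s). 27 - s)") auto
declare mk.simps[simp del]

lemma mk_sem: "mk b ws s0 \<Longrightarrow> s0 \<le> s \<Longrightarrow> s < 27 \<Longrightarrow> \<not> pmk s ws [1,1,1,0,0,0] \<or> s = (if b then 3 else 0)"
proof (induction "27 - s0" arbitrary: s0)
  case 0 then show ?case by simp
next
  case (Suc m)
  have s0: "s0 < 27" using Suc.hyps by simp
  have rec: "mk b ws s0 = ((\<not> pmk s0 ws [1,1,1,0,0,0] \<or> s0 = (if b then 3 else 0)) \<and> mk b ws (Suc s0))"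
    using s0 by (subst mk.simps[of b ws s0]) simp
  show ?case
  proof (cases "s = s0")
    case True then show ?thesis using rec Suc.prems by simp
  next
    case False
    then show ?thesis using rec Suc.prems Suc.hyps(1)[of "Suc s0"] Suc.hyps(2) by simp
  qed
qed

definition chk4 :: "bool \<Rightarrow> bool \<Rightarrow> bool \<Rightarrow> bool \<Rightarrow> bool" where
  "chk4 b0 b1 b2 b3 = mk b1 [b0, b1, b2, b3] 0"

lemma chk4_all: "chk4 b0 b1 b2 b3"
  unfolding chk4_def
  by (cases b0; cases b1; cases b2; cases b3; simp only: alls.simps allq.simps pm.simps vl_def nx_def nw_def FFv_tab list.sel if_True if_False rel_simps arith_simps numeral_plus_one one_add_one add_0_left simp_thms mk.simps pmk.simps cong: if_weak_cong)

lemma marker: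
  assumes e: "e < 27" and H: "\<forall>j<6. aw (27*q + e + j) = [1,1,1,0,0,0] ! j"
  shows "e = 3 * b2n (tm q)"
proof -
  define ws where "ws = win q 4"
  have AW: "\<And>i. i < 54 \<Longrightarrow> aw (27*q + i) = V ws i" unfolding ws_def by (rule AW_V) simp
  have v: "\<forall>j<length [1::nat,1,1,0,0,0]. V ws (e + j) = [1,1,1,0,0,0] ! j" using H AW e by (simp add: add.assoc)
  have "pmk (e mod 27) (drop (e div 27) ws) [1,1,1,0,0,0]" by (rule pmk_sem[OF v])
  then have p: "pmk e ws [1,1,1,0,0,0]" using e by simp
  have "chk4 (tm (q-1)) (tm q) (tm (q+1)) (tm (q+2))" by (rule chk4_all)
  then have "mk (tm q) ws 0" unfolding chk4_def ws_def win4 by simp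
  then have "\<not> pmk e ws [1,1,1,0,0,0] \<or> e = (if tm q then 3 else 0)" using mk_sem e by blast
  then have "e = (if tm q then 3 else 0)" using p by blast
  then show ?thesis by (simp add: b2n_def)
qed


lemma nt3_tm: "nt3 (tm (k-1)) (tm k) (tm (Suc k))"
proof (cases k)
  case 0 then show ?thesis by (simp add: nt3_def)
next
  case (Suc k') then show ?thesis using no3'[of k'] by (simp add: eval_nat_numeral)
qed

lemma KL': "x = 27*k + e \<Longrightarrow> e < 27 \<Longrightarrow> aw x = FFv e (tm (k-1)) (tm k) (tm (Suc k))"
  using KL FF_FFv by simp

lemma interior:
  assumes pQ: "p = 27*Q + r" "r < 27" "1 \<le> Q" and H: "\<forall>j<p. aw (s+j) = aw (s+p+j)"
    and k: "s \<le> 27*k" "27*k + 27 \<le> s + p"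
  shows "concI r (tm (k-1)) (tm k) (tm (Suc k)) (tm (k+Q-1)) (tm (k+Q)) (tm (Suc (k+Q))) (tm (Suc (Suc (k+Q))))"
proof (rule int_lemma)
  show "r < 27" by fact
  show "nt3 (tm (k-1)) (tm k) (tm (Suc k))" by (rule nt3_tm)
  show "nt3 (tm (k+Q-1)) (tm (k+Q)) (tm (Suc (k+Q)))" by (rule nt3_tm)
  show "nt3 (tm (k+Q)) (tm (Suc (k+Q))) (tm (Suc (Suc (k+Q))))" using nt3_tm[of "Suc (k+Q)"] by simp
  show "\<forall>e<27. EQI r (tm (k-1)) (tm k) (tm (Suc k)) (tm (k+Q-1)) (tm (k+Q)) (tm (Suc (k+Q))) (tm (Suc (Suc (k+Q)))) e"
  proof (intro allI impI)
    fix e :: nat assume e: "e < 27"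
    define j where "j = 27*k + e - s"
    have j: "j < p" "s + j = 27*k + e" using k e unfolding j_def by auto
    have eq: "aw (27*k + e) = aw (27*k + e + p)" using H j by (metis add.commute add.left_commute)
    have L: "aw (27*k + e) = FFv e (tm (k-1)) (tm k) (tm (Suc k))" by (rule KL'[OF refl e])
    show "EQI r (tm (k-1)) (tm k) (tm (Suc k)) (tm (k+Q-1)) (tm (k+Q)) (tm (Suc (k+Q))) (tm (Suc (Suc (k+Q)))) e"
    proof (cases "e + r < 27")
      case True
      have "aw (27*k + e + p) = FFv (e+r) (tm (k+Q-1)) (tm (k+Q)) (tm (Suc (k+Q)))"
        by (rule KL'[OF _ True]) (simp add: pQ)
      then show ?thesis using eq L True unfolding EQI_def by simp
    next
      case False
      have "aw (27*k + e + p) = FFv (e+r-27) (tm (Suc (k+Q) - 1)) (tm (Suc (k+Q))) (tm (Suc (Suc (k+Q))))"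
        by (rule KL'[OF _]) (use False pQ e in simp_all)
      then show ?thesis using eq L False unfolding EQI_def by simp
    qed
  qed
qed

lemma ff_neq: "FFv 25 A True False \<noteq> FFv 1 False True True"
  by (cases A) (simp_all add: FFv_tab)

lemma large:
  assumes p: "54 \<le> p" and H: "\<forall>j<p. aw (s+j) = aw (s+p+j)"
  shows False
proof -
  define Q where "Q = p div 27"
  define r where "r = p mod 27"
  have pQ: "p = 27*Q + r" "r < 27" "2 \<le> Q" using p unfolding Q_def r_def by auto
  have Q1: "1 \<le> Q" using pQ by simp
  have INT: "\<And>k. s \<le> 27*k \<Longrightarrow> 27*k + 27 \<le> s + p \<Longrightarrow>
     concI r (tm (k-1)) (tm k) (tm (Suc k)) (tm (k+Q-1)) (tm (k+Q)) (tm (Suc (k+Q))) (tm (Suc (Suc (k+Q))))"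
    using interior[OF pQ(1) pQ(2) Q1 H] by blast
  define k0 where "k0 = (s + 26) div 27"
  have k0: "s \<le> 27*k0" "27*k0 \<le> s + 26" unfolding k0_def by linarith+
  have c0: "concI r (tm (k0-1)) (tm k0) (tm (Suc k0)) (tm (k0+Q-1)) (tm (k0+Q)) (tm (Suc (k0+Q))) (tm (Suc (Suc (k0+Q))))"
    using INT[OF k0(1)] k0 p by simp
  then have r03: "r = 0 \<or> r = 3" unfolding concI_def by blast
  show False
  proof (cases "r = 3")
    case True
    define k1 where "k1 = (s + 28) div 27"
    have k1: "s + 2 \<le> 27*k1" "27*k1 \<le> s + 28" unfolding k1_def by linarith+
    have k1p: "1 \<le> k1" using k1 by simp
    have "concI r (tm (k1-1)) (tm k1) (tm (Suc k1)) (tm (k1+Q-1)) (tm (k1+Q)) (tm (Suc (k1+Q))) (tm (Suc (Suc (k1+Q))))"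
      using INT k1 pQ True by simp
    then have vals: "tm (k1-1)" "\<not> tm k1" "\<not> tm (k1+Q-1)" "tm (k1+Q)" "tm (Suc (k1+Q))"
      using True unfolding concI_def by simp_all
    define x where "x = 27*(k1-1) + 25"
    have xs: "s \<le> x" "x - s < p" using k1 k1p pQ True unfolding x_def by auto
    have "aw (s + (x - s)) = aw (s + p + (x - s))" using H xs by blast
    then have eq: "aw x = aw (x + p)" using xs by (simp add: add.commute add.left_commute)
    have L: "aw x = FFv 25 (tm (k1-1-1)) (tm (k1-1)) (tm (Suc (k1-1)))" by (rule KL'[OF _]) (simp_all add: x_def)
    have R: "aw (x + p) = FFv 1 (tm (k1+Q-1)) (tm (k1+Q)) (tm (Suc (k1+Q)))"
      by (rule KL'[OF _]) (use k1p pQ True in \<open>simp_all add: x_def\<close>)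
    have "Suc (k1 - 1) = k1" using k1p by simp
    then show False using eq L R vals ff_neq[of "tm (k1-1-1)"] by simp
  next
    case False
    then have r0: "r = 0" using r03 by simp
    have pp: "p = 27*Q" using pQ r0 by simp
    have R0: "\<And>k. k0 \<le> k \<Longrightarrow> k + 2 \<le> k0 + Q \<Longrightarrow>
        tm k = tm (k+Q) \<and> tm (Suc k) = tm (Suc (k+Q)) \<and> (tm k \<longrightarrow> tm (k-1) = tm (k+Q-1))"
    proof -
      fix k assume a: "k0 \<le> k" "k + 2 \<le> k0 + Q"
      have "s \<le> 27*k" "27*k + 27 \<le> s + p" using a k0 pp by linarith+
      then have "concI r (tm (k-1)) (tm k) (tm (Suc k)) (tm (k+Q-1)) (tm (k+Q)) (tm (Suc (k+Q))) (tm (Suc (Suc (k+Q))))"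
        by (rule INT)
      then show "tm k = tm (k+Q) \<and> tm (Suc k) = tm (Suc (k+Q)) \<and> (tm k \<longrightarrow> tm (k-1) = tm (k+Q-1))"
        using r0 unfolding concI_def by simp
    qed
    have sq: "\<And>j. k0 \<le> j \<Longrightarrow> j \<le> k0 + Q - 1 \<Longrightarrow> tm j = tm (j+Q)"
    proof -
      fix j assume a: "k0 \<le> j" "j \<le> k0 + Q - 1"
      show "tm j = tm (j+Q)"
      proof (cases "j + 2 \<le> k0 + Q")
        case True then show ?thesis using R0 a by blast
      next
        case False
        then have "j - 1 + 2 \<le> k0 + Q" "k0 \<le> j - 1" "Suc (j - 1) = j" using a pQ by auto
        then show ?thesis using R0[of "j-1"] by auto
      qed
    qed
    have ovl: "\<And>i. (\<forall>j\<le>Q. tm (i+j) = tm (i+j+Q)) \<Longrightarrow> False" using overlap_free[OF Q1] by blast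
    have caseA: "tm (k0+Q) = tm (k0+Q+Q) \<Longrightarrow> False"
    proof -
      assume a: "tm (k0+Q) = tm (k0+Q+Q)"
      have "\<forall>j\<le>Q. tm (k0+j) = tm (k0+j+Q)"
      proof (intro allI impI)
        fix j assume "j \<le> Q"
        then show "tm (k0+j) = tm (k0+j+Q)" using a sq[of "k0+j"] by (cases "j = Q") auto
      qed
      then show False by (rule ovl)
    qed
    have caseB: "1 \<le> k0 \<Longrightarrow> tm (k0-1) = tm (k0+Q-1) \<Longrightarrow> False"
    proof -
      assume a: "1 \<le> k0" "tm (k0-1) = tm (k0+Q-1)"
      have "\<forall>j\<le>Q. tm (k0-1+j) = tm (k0-1+j+Q)"
      proof (intro allI impI)
        fix j assume j: "j \<le> Q"
        show "tm (k0-1+j) = tm (k0-1+j+Q)"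
        proof (cases "j = 0")
          case True then show ?thesis using a by (simp add: add.commute)
        next
          case False
          then have "k0 \<le> k0-1+j" "k0-1+j \<le> k0+Q-1" using a j by auto
          then show ?thesis using sq by blast
        qed
      qed
      then show False by (rule ovl)
    qed
    show False
    proof (cases "s = 27*k0")
      case True
      have "s \<le> 27*(k0+Q-1)" "27*(k0+Q-1) + 27 \<le> s + p" using True pp pQ by auto
      then have "concI r (tm (k0+Q-1-1)) (tm (k0+Q-1)) (tm (Suc (k0+Q-1))) (tm (k0+Q-1+Q-1)) (tm (k0+Q-1+Q)) (tm (Suc (k0+Q-1+Q))) (tm (Suc (Suc (k0+Q-1+Q))))"
        by (rule INT)
      then have "tm (Suc (k0+Q-1)) = tm (Suc (k0+Q-1+Q))" using r0 unfolding concI_def by simp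
      moreover have "Suc (k0+Q-1) = k0+Q" "Suc (k0+Q-1+Q) = k0+Q+Q" using pQ by auto
      ultimately show False using caseA by simp
    next
      case False
      then have sk: "s < 27*k0" using k0 by simp
      then have k01: "1 \<le> k0" by (cases k0) auto
      show False
      proof (cases "tm k0")
        case True
        then have "tm (k0-1) = tm (k0+Q-1)" using R0[of k0] pQ by simp
        then show False using caseB k01 by blast
      next
        case False
        define e0 where "e0 = s + 27 - 27*k0"
        have e0: "1 \<le> e0" "e0 < 27" "s = 27*(k0-1) + e0" using k0 sk k01 unfolding e0_def by auto
        have tQ: "tm (k0+Q) = False" using sq[of k0] False pQ by simp
        have t2: "tm (k0+Q-2+Q) = tm (k0+Q-2)" using sq[of "k0+Q-2"] pQ by simp
        have t1: "tm (k0+Q-1+Q) = tm (k0+Q-1)" using sq[of "k0+Q-1"] pQ by simp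
        have c1: "\<forall>e. e0 \<le> e \<and> e < 27 \<longrightarrow> FFv e (tm (k0-1-1)) (tm (k0-1)) False = FFv e (tm (k0+Q-1-1)) (tm (k0+Q-1)) False"
        proof (intro allI impI)
          fix e assume e: "e0 \<le> e \<and> e < 27"
          have j: "e - e0 < p" using e pp pQ by linarith
          have eq: "aw (s + (e - e0)) = aw (s + p + (e - e0))" using H j by blast
          have L: "aw (s + (e - e0)) = FFv e (tm (k0-1-1)) (tm (k0-1)) (tm (Suc (k0-1)))"
            by (rule KL') (use e e0 in simp_all)
          have R: "aw (s + p + (e - e0)) = FFv e (tm (k0-1+Q-1)) (tm (k0-1+Q)) (tm (Suc (k0-1+Q)))"
            by (rule KL') (use e e0 pp in simp_all)
          have "Suc (k0-1) = k0" "k0-1+Q-1 = k0+Q-1-1" "k0-1+Q = k0+Q-1" "Suc (k0-1+Q) = k0+Q" using k01 by auto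
          then show "FFv e (tm (k0-1-1)) (tm (k0-1)) False = FFv e (tm (k0+Q-1-1)) (tm (k0+Q-1)) False"
            using eq L R False tQ by simp
        qed
        have c2: "\<forall>e<e0. FFv e (tm (k0+Q-1-1)) (tm (k0+Q-1)) False = FFv e (tm (k0+Q-1-1)) (tm (k0+Q-1)) (tm (k0+Q+Q))"
        proof (intro allI impI)
          fix e assume e: "e < e0"
          define j where "j = 27*Q + e - e0"
          have j: "j < p" "s + j = 27*(k0+Q-1) + e" "s + p + j = 27*(k0+Q+Q-1) + e"
            using e e0 pp pQ k01 unfolding j_def by auto
          have eq: "aw (s + j) = aw (s + p + j)" using H j by blast
          have L: "aw (s + j) = FFv e (tm (k0+Q-1-1)) (tm (k0+Q-1)) (tm (Suc (k0+Q-1)))"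
            by (rule KL'[OF j(2)]) (use e e0 in simp)
          have R: "aw (s + p + j) = FFv e (tm (k0+Q+Q-1-1)) (tm (k0+Q+Q-1)) (tm (Suc (k0+Q+Q-1)))"
            by (rule KL'[OF j(3)]) (use e e0 in simp)
          have "Suc (k0+Q-1) = k0+Q" "k0+Q+Q-1-1 = k0+Q-2+Q" "k0+Q+Q-1 = k0+Q-1+Q" "Suc (k0+Q+Q-1) = k0+Q+Q"
            using pQ k01 by auto
          then show "FFv e (tm (k0+Q-1-1)) (tm (k0+Q-1)) False = FFv e (tm (k0+Q-1-1)) (tm (k0+Q-1)) (tm (k0+Q+Q))"
            using eq L R tQ t1 t2 by (simp add: numeral_2_eq_2)
        qed
        have v1: "nt3 (tm (k0-1-1)) (tm (k0-1)) False"
          using nt3_tm[of "k0-1"] False k01 by simp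
        have v2: "nt3 (tm (k0+Q-1-1)) (tm (k0+Q-1)) False"
          using nt3_tm[of "k0+Q-1"] tQ pQ by simp
        have v3: "nt3 (tm (k0+Q-1-1)) (tm (k0+Q-1)) (tm (k0+Q+Q))"
        proof -
          have "nt3 (tm (k0+Q+Q-1-1)) (tm (k0+Q+Q-1)) (tm (Suc (k0+Q+Q-1)))" by (rule nt3_tm)
          moreover have "k0+Q+Q-1-1 = k0+Q-2+Q" "k0+Q+Q-1 = k0+Q-1+Q" "Suc (k0+Q+Q-1) = k0+Q+Q"
            using pQ k01 by auto
          ultimately show ?thesis using t1 t2 by (simp add: numeral_2_eq_2)
        qed
        have "tm (k0-1) = tm (k0+Q-1) \<or> tm (k0+Q+Q) = False"
          by (rule end_lemma[OF e0(1) e0(2) v1 v2 v3 c1 c2])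
        then show False
        proof
          assume "tm (k0-1) = tm (k0+Q-1)" then show False using caseB k01 by blast
        next
          assume "tm (k0+Q+Q) = False" then show False using caseA tQ by simp
        qed
      qed
    qed
  qed
qed

lemma zeta_pre: "j < 6 \<Longrightarrow> zeta c ! j = [1,1,1,0,0,0] ! j"
proof -
  assume "j < 6"
  then have "j = 0 \<or> j = 1 \<or> j = 2 \<or> j = 3 \<or> j = 4 \<or> j = 5" by auto
  then show ?thesis by (auto simp add: zeta_def)
qed

lemma zeta_len: "6 \<le> length (zeta c)" by (simp add: zeta_def)

lemma medium:
  assumes p: "36 \<le> p" "p \<le> 53" and H: "\<forall>j<p. aw (s+j) = aw (s+p+j)"
  shows "p = 51"
proof -
  define q where "q = s div 27"
  define k where "k = (if s \<le> 27*q + 3*b2n (tm q) then q else Suc q)"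
  define B where "B = 27*k + 3*b2n (tm k)"
  have sq: "27*q \<le> s" "s < 27*q + 27" unfolding q_def by linarith+
  have B: "s \<le> B" "B \<le> s + 30"
  proof -
    show "s \<le> B" using sq unfolding B_def k_def by (auto simp add: b2n_def)
    show "B \<le> s + 30" using sq unfolding B_def k_def by (auto simp add: b2n_def)
  qed
  have mk: "\<forall>j<6. aw (B + j) = [1,1,1,0,0,0] ! j"
  proof (intro allI impI)
    fix j :: nat assume j: "j < 6"
    have "j < length (zeta (vtm k))" using zeta_len[of "vtm k"] j by simp
    then have "aw (B + j) = zeta (vtm k) ! j" unfolding B_def by (rule blk)
    then show "aw (B + j) = [1,1,1,0,0,0] ! j" using zeta_pre[OF j] by simp
  qed
  have mk2: "\<forall>j<6. aw (27 * ((B+p) div 27) + (B+p) mod 27 + j) = [1,1,1,0,0,0] ! j"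
  proof (intro allI impI)
    fix j :: nat assume j: "j < 6"
    have jj: "B - s + j < p" using B j p by simp
    have e1: "s + (B - s + j) = B + j" using B by simp
    have e2: "s + p + (B - s + j) = B + p + j" using B by simp
    have "aw (B + j) = aw (B + p + j)" using H jj e1 e2 by metis
    moreover have "aw (27 * ((B+p) div 27) + (B+p) mod 27 + j) = aw (B + p + j)" by simp
    ultimately show "aw (27 * ((B+p) div 27) + (B+p) mod 27 + j) = [1,1,1,0,0,0] ! j" using mk j by simp
  qed
  have "(B+p) mod 27 = 3 * b2n (tm ((B+p) div 27))" by (rule marker[OF _ mk2]) simp
  then have e: "B + p = 27 * ((B+p) div 27) + 3 * b2n (tm ((B+p) div 27))" by (metis div_mult_mod_eq add.commute mult.commute)
  have b1: "b2n (tm k) \<le> 1" "b2n (tm ((B+p) div 27)) \<le> 1" by (simp_all add: b2n_def)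
  show "p = 51" using e b1 p unfolding B_def by presburger
qed

lemma sq_char:
  assumes p: "1 \<le> p" and H: "\<forall>j<p. aw (s+j) = aw (s+p+j)"
  shows "p = 1 \<or> (p = 2 \<and> aw s = 0 \<and> aw (Suc s) = 1)"
proof -
  consider "p = 1" | "2 \<le> p \<and> p \<le> 35" | "36 \<le> p \<and> p \<le> 53" | "54 \<le> p" using p by linarith
  then show ?thesis
  proof cases
    case 1 then show ?thesis by simp
  next
    case 2 then show ?thesis using small_sq H by blast
  next
    case 3
    then have "p = 51" using medium H by blast
    then show ?thesis using sq51 H by blast
  next
    case 4 then show ?thesis using large H by blast
  qed
qed

lemma aw_le1: "aw i \<le> 1"
proof -
  have "aw i = FFv (i mod 27) (tm (i div 27 - 1)) (tm (i div 27)) (tm (Suc (i div 27)))"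
    by (rule KL') simp_all
  then show ?thesis using FFv_le1[of "i mod 27"] by simp
qed

lemma aw_v: "e < 27 \<Longrightarrow> aw e = FFv e False False True"
  using KL'[of e 0 e] by simp

lemma aw_vals: "aw 0 = 1" "aw (Suc 0) = 1" "aw 3 = 0" "aw 4 = 0" "aw 9 = 0" "aw 10 = 1" "aw 11 = 0" "aw 12 = 1"
  by (simp_all add: aw_v FFv_tab)

lemma squares: "{u. is_square u \<and> is_factor u aw} = {[0,0], [1,1], [0,1,0,1]}"
proof
  show "{u. is_square u \<and> is_factor u aw} \<subseteq> {[0,0], [1,1], [0,1,0,1]}"
  proof
    fix u assume "u \<in> {u. is_square u \<and> is_factor u aw}"
    then obtain v i where v: "v \<noteq> []" "u = v @ v" and i: "u = map aw [i..<i + length u]"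
      unfolding is_square_def is_factor_def by blast
    define p where "p = length v"
    have p: "1 \<le> p" using v unfolding p_def by (cases v) auto
    have lu: "length u = 2*p" using v unfolding p_def by simp
    have i': "u = map aw [i..<i + 2*p]" using i by (simp only: lu)
    have ui: "\<And>j. j < 2*p \<Longrightarrow> u ! j = aw (i+j)" unfolding i' by simp
    have H: "\<forall>j<p. aw (i+j) = aw (i+p+j)"
    proof (intro allI impI)
      fix j assume j: "j < p"
      have "u ! j = u ! (p + j)" using v j unfolding p_def by (simp add: nth_append)
      then show "aw (i+j) = aw (i+p+j)" using ui[of j] ui[of "p+j"] j by (simp add: add.assoc)
    qed
    have c: "p = 1 \<or> (p = 2 \<and> aw i = 0 \<and> aw (Suc i) = 1)" by (rule sq_char[OF p H])
    then show "u \<in> {[0,0], [1,1], [0,1,0,1]}"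
    proof
      assume p1: "p = 1"
      have "u = [aw i, aw (Suc i)]" unfolding i' p1 by (simp add: eval_nat_numeral)
      moreover have "aw (Suc i) = aw i" using H p1 by simp
      moreover have "aw i = 0 \<or> aw i = 1" using aw_le1[of i] by auto
      ultimately show ?thesis by auto
    next
      assume p2: "p = 2 \<and> aw i = 0 \<and> aw (Suc i) = 1"
      have "u = [aw i, aw (Suc i), aw (Suc (Suc i)), aw (Suc (Suc (Suc i)))]" using p2 unfolding i' by (simp add: eval_nat_numeral)
      moreover have "aw (Suc (Suc i)) = aw i" "aw (Suc (Suc (Suc i))) = aw (Suc i)"
        using H[rule_format, of 0] H[rule_format, of 1] p2 by (simp_all add: eval_nat_numeral)
      ultimately show ?thesis using p2 by simp
    qed
  qed
next
  show "{[0,0], [1,1], [0,1,0,1]} \<subseteq> {u. is_square u \<and> is_factor u aw}"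
  proof -
    have f1: "is_factor [0::nat,0] aw" unfolding is_factor_def by (rule exI[of _ 3]) (simp add: upt_rec aw_vals)
    have f2: "is_factor [1::nat,1] aw" unfolding is_factor_def by (rule exI[of _ 0]) (simp add: upt_rec aw_vals)
    have f3: "is_factor [0::nat,1,0,1] aw" unfolding is_factor_def by (rule exI[of _ 9]) (simp add: upt_rec aw_vals)
    have s1: "is_square [0::nat,0]" unfolding is_square_def by (rule exI[of _ "[0]"]) simp
    have s2: "is_square [1::nat,1]" unfolding is_square_def by (rule exI[of _ "[1]"]) simp
    have s3: "is_square [0::nat,1,0,1]" unfolding is_square_def by (rule exI[of _ "[0,1]"]) simp
    show ?thesis using f1 f2 f3 s1 s2 s3 by auto
  qed
qed

theorem theorem4:
  shows "{u. is_square u \<and> is_factor u (morph_inf zeta vtm)} = {[0,0], [1,1], [0,1,0,1]}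
         \<and> two_automatic_with_states 88 (morph_inf zeta vtm)"
  using squares automatic by simp

end
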